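(* Let $J$ be a finite set with $n=|J|\ge2$, let $E$ be a partition of $J$ into pairs, and let $F:\{0,1\}^J\to\mathbb{Q}_{\ge0}$ be even-windable. For $k\ge0$ let $\Omega_k$ be the set of $k$-assignments $x$ (with respect to $E$) with $F(x)>0$, let $\Omega=\Omega_0\cup\Omega_2$, and assume $\Omega_0\neq\emptyset$. Define $P:\Omega\times\Omega\to[0,1]$ by $P(x,y)=\frac{2}{n^2}\min(1,F(y)/F(x))$ if $d(x,y)=2$, $P(x,x)=1-\frac2{n^2}\sum_{y'\in\Omega:d(x,y')=2}\min(1,F(y')/F(x))$, and $P(x,y)=0$ otherwise. Let $\pi(x)=F(x)/\sum_{y\in\Omega}F(y)$ for $x\in\Omega$ and $\pi(\Omega_0)=\sum_{x\in\Omega_0}\pi(x)$. Then for all $x\in\Omega$ and all integers $t\ge0$, $$\tfrac12\sum_{y\in\Omega}|P^t(x,y)-\pi(y)|\le\tfrac12\pi(x)^{-1/2}\exp\!\left(-t\,\pi(\Omega_0)^2/n^4\right),$$ where $P^t$ is the $t$-th matrix power.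
   Context: For $x,y\in\{0,1\}^J$, $x\oplus y$ is coordinatewise addition mod 2, $d(x,y)=|\{i:x_i\ne y_i\}|$, and $\mathbf S$ is the characteristic vector of $S\subseteq J$. For a partition $E$ of $J$ into pairs, a $k$-assignment is a configuration $x\in\{0,1\}^J$ such that $x_i\ne x_j$ for exactly $k$ pairs $\{i,j\}\in E$. For $z\in\{0,1\}^J$, $\mathrm{Match}(z)$ is the set of partitions of $\{i:z_i=1\}$ into pairs (empty if $\sum z_i$ is odd). $F:\{0,1\}^J\to\mathbb{Q}_{\ge0}$ is even-windable if there exist $B(x,y,M)\ge0$ for all $x,y\in\{0,1\}^J$, $M\in\mathrm{Match}(x\oplus y)$, with (EW1) $F(x)F(y)=\sum_{M\in\mathrm{Match}(x\oplus y)}B(x,y,M)$ for all $x,y$, and (EW2) $B(x,y,M)=B(x\oplus\mathbf S,y\oplus\mathbf S,M)$ for all $x,y$ and all $S\in M\in\mathrm{Match}(x\oplus y)$. *)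

theory Defs
  imports Complex_Main
begin

text \<open>Configurations x in {0,1}^J are encoded by subsets of J (x_i = 1 iff i in x).
  Then x XOR y is the symmetric difference, and d(x,y) its cardinality.\<close>

definition sdiff :: "'a set \<Rightarrow> 'a set \<Rightarrow> 'a set" where
  "sdiff x y = (x - y) \<union> (y - x)"

definition hdist :: "'a set \<Rightarrow> 'a set \<Rightarrow> nat" where
  "hdist x y = card (sdiff x y)"

definition pair_partition :: "'a set \<Rightarrow> 'a set set \<Rightarrow> bool" where
  "pair_partition A M \<longleftrightarrow>
     (\<forall>S\<in>M. S \<subseteq> A \<and> card S = 2) \<and>
     (\<forall>S\<in>M. \<forall>T\<in>M. S \<noteq> T \<longrightarrow> S \<inter> T = {}) \<and>
     \<Union>M = A"

definition Match :: "'a set \<Rightarrow> 'a set set set" where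
  "Match z = {M. pair_partition z M}"

text \<open>x is a k-assignment: x_i \<noteq> x_j for exactly k pairs {i,j} in E.\<close>
definition is_k_assignment :: "'a set set \<Rightarrow> nat \<Rightarrow> 'a set \<Rightarrow> bool" where
  "is_k_assignment E k x \<longleftrightarrow> card {e\<in>E. card (e \<inter> x) = 1} = k"

definition even_windable :: "'a set \<Rightarrow> ('a set \<Rightarrow> rat) \<Rightarrow> bool" where
  "even_windable J F \<longleftrightarrow>
     (\<exists>B :: 'a set \<Rightarrow> 'a set \<Rightarrow> 'a set set \<Rightarrow> rat.
        (\<forall>x y M. x \<subseteq> J \<longrightarrow> y \<subseteq> J \<longrightarrow> M \<in> Match (sdiff x y) \<longrightarrow> B x y M \<ge> 0) \<and>
        (\<forall>x y. x \<subseteq> J \<longrightarrow> y \<subseteq> J \<longrightarrow> F x * F y = (\<Sum>M\<in>Match (sdiff x y). B x y M)) \<and>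
        (\<forall>x y M S. x \<subseteq> J \<longrightarrow> y \<subseteq> J \<longrightarrow> M \<in> Match (sdiff x y) \<longrightarrow> S \<in> M \<longrightarrow>
            B x y M = B (sdiff x S) (sdiff y S) M))"

definition Omega_k :: "'a set \<Rightarrow> 'a set set \<Rightarrow> ('a set \<Rightarrow> rat) \<Rightarrow> nat \<Rightarrow> 'a set set" where
  "Omega_k J E F k = {x. x \<subseteq> J \<and> is_k_assignment E k x \<and> F x > 0}"

definition Omega :: "'a set \<Rightarrow> 'a set set \<Rightarrow> ('a set \<Rightarrow> rat) \<Rightarrow> 'a set set" where
  "Omega J E F = Omega_k J E F 0 \<union> Omega_k J E F 2"

definition Pmat :: "'a set \<Rightarrow> 'a set set \<Rightarrow> ('a set \<Rightarrow> rat) \<Rightarrow> 'a set \<Rightarrow> 'a set \<Rightarrow> real" where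
  "Pmat J E F x y =
     (let n = real (card J); Om = Omega J E F in
      if hdist x y = 2 then 2 / n^2 * min 1 (real_of_rat (F y) / real_of_rat (F x))
      else if x = y then
        1 - 2 / n^2 * (\<Sum>y'\<in>{y'\<in>Om. hdist x y' = 2}. min 1 (real_of_rat (F y') / real_of_rat (F x)))
      else 0)"

fun Ppow :: "'a set \<Rightarrow> 'a set set \<Rightarrow> ('a set \<Rightarrow> rat) \<Rightarrow> nat \<Rightarrow> 'a set \<Rightarrow> 'a set \<Rightarrow> real" where
  "Ppow J E F 0 x y = (if x = y then 1 else 0)"
| "Ppow J E F (Suc t) x y = (\<Sum>z\<in>Omega J E F. Ppow J E F t x z * Pmat J E F z y)"

definition pi_dist :: "'a set \<Rightarrow> 'a set set \<Rightarrow> ('a set \<Rightarrow> rat) \<Rightarrow> 'a set \<Rightarrow> real" where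
  "pi_dist J E F x = real_of_rat (F x) / (\<Sum>y\<in>Omega J E F. real_of_rat (F y))"

end

theory Submission
  imports Defs
begin

lemma card_pair_int_1: assumes "p \<noteq> q" shows "card ({p,q} \<inter> X) = 1 \<longleftrightarrow> (p\<in>X) \<noteq> (q\<in>X)"
  using assms by (cases "p\<in>X"; cases "q\<in>X") (auto simp: Int_insert_left)

definition beta :: "'a set set \<Rightarrow> 'a set \<Rightarrow> 'a set set" where
  "beta E U = {e\<in>E. card (e \<inter> U) = 1}"
lemma sdiff_mem: "p \<in> sdiff A B \<longleftrightarrow> (p\<in>A) \<noteq> (p\<in>B)" by (auto simp: sdiff_def)
lemma l1: assumes "p \<noteq> q" shows "card ({p,q} \<inter> sdiff A B) = 1 \<longleftrightarrow> (card ({p,q} \<inter> A) = 1) \<noteq> (card ({p,q} \<inter> B) = 1)"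
  unfolding card_pair_int_1[OF assms] sdiff_mem 
  by (cases "p\<in>A"; cases "p\<in>B"; cases "q\<in>A"; cases "q\<in>B") simp_all
lemma beta_mem: "e \<in> beta E X \<longleftrightarrow> e \<in> E \<and> card (e \<inter> X) = 1" by (simp add: beta_def)
lemma beta_sdiff:
  assumes "\<forall>e\<in>E. card e = 2"
  shows "beta E (sdiff A B) = sdiff (beta E A) (beta E B)"
proof -
  have *: "card (e \<inter> sdiff A B) = 1 \<longleftrightarrow> (card (e \<inter> A) = 1) \<noteq> (card (e \<inter> B) = 1)" if "e \<in> E" for e
  proof -
    have "card e = 2" using assms that by blast
    then obtain p q where e: "e = {p,q}" "p \<noteq> q" unfolding card_2_iff by blast
    show ?thesis unfolding e(1) using l1[OF e(2)] .
  qed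
  show ?thesis
  proof (rule set_eqI)
    fix e show "e \<in> beta E (sdiff A B) \<longleftrightarrow> e \<in> sdiff (beta E A) (beta E B)"
      unfolding sdiff_mem beta_mem using * by (cases "e \<in> E") auto
  qed
qed
lemma beta_empty[simp]: "beta E {} = {}" by (simp add: beta_def)

lemma pp_card: "pair_partition A M \<Longrightarrow> S \<in> M \<Longrightarrow> card S = 2" by (simp add: pair_partition_def)
lemma pp_sub: "pair_partition A M \<Longrightarrow> S \<in> M \<Longrightarrow> S \<subseteq> A" by (simp add: pair_partition_def)
lemma pp_disj: "pair_partition A M \<Longrightarrow> S \<in> M \<Longrightarrow> T \<in> M \<Longrightarrow> S \<noteq> T \<Longrightarrow> S \<inter> T = {}"
  by (simp add: pair_partition_def)
lemma pp_Union: "pair_partition A M \<Longrightarrow> \<Union>M = A" by (simp add: pair_partition_def)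
lemma pp_fin: assumes "pair_partition A M" "finite A" shows "finite M"
proof -
  have "M \<subseteq> Pow A" using pp_sub[OF assms(1)] by blast
  then show ?thesis using assms(2) finite_subset by blast
qed

lemma pp_disj_Union: "pair_partition A M \<Longrightarrow> S \<in> M \<Longrightarrow> Done \<subseteq> M \<Longrightarrow> S \<notin> Done \<Longrightarrow> S \<inter> \<Union>Done = {}"
  using pp_disj by blast

locale ppJ =
  fixes J :: "'a set" and E :: "'a set set"
  assumes finJ: "finite J" and ppE: "pair_partition J E"
begin

lemma E_card: "e\<in>E \<Longrightarrow> card e = 2" using ppE pp_card by blast
lemma E_card_all: "\<forall>e\<in>E. card e = 2" using E_card by blast
lemma E_sub: "e\<in>E \<Longrightarrow> e \<subseteq> J" using ppE pp_sub by blast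
lemma E_disj: "e\<in>E \<Longrightarrow> e'\<in>E \<Longrightarrow> e\<noteq>e' \<Longrightarrow> e\<inter>e'={}" using ppE pp_disj by blast
lemma E_cover: "p\<in>J \<Longrightarrow> \<exists>e\<in>E. p\<in>e" using ppE pp_Union by blast
lemma finE: "finite E" using ppE finJ pp_fin by blast

lemma bsd: "beta E (sdiff A B) = sdiff (beta E A) (beta E B)"
  using beta_sdiff E_card_all by blast

lemma beta_pair:
  assumes "p \<noteq> q" "p \<in> e1" "q \<in> e2" "e1 \<in> E" "e2 \<in> E"
  shows "beta E {p,q} = (if e1 = e2 then {} else {e1,e2})"
proof -
  have pe: "p \<in> e \<longleftrightarrow> e = e1" if "e \<in> E" for e using E_disj assms that by blast
  have qe: "q \<in> e \<longleftrightarrow> e = e2" if "e \<in> E" for e using E_disj assms that by blast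
  have "e \<in> beta E {p,q} \<longleftrightarrow> e \<in> E \<and> (e = e1) \<noteq> (e = e2)" for e
  proof -
    have "card (e \<inter> {p,q}) = card ({p,q} \<inter> e)" by (simp add: Int_commute)
    then show ?thesis unfolding beta_def using card_pair_int_1[OF assms(1)] pe qe by auto
  qed
  then show ?thesis using assms by auto
qed

lemma walk:
  assumes pD: "pair_partition D M" and DJ: "D \<subseteq> J" and DM: "Done \<subseteq> M"
    and f: "f \<in> beta E (\<Union>Done)" and fD: "f \<notin> beta E D"
  shows "\<exists>S\<in>M - Done. \<exists>v\<in>S. \<exists>e'\<in>E. v\<in>e' \<and> e' \<noteq> f \<and> S \<inter> \<Union>Done = {} \<and>
            beta E (\<Union>Done \<union> S) = sdiff (beta E (\<Union>Done)) {f,e'}"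
proof -
  define U where "U = \<Union>Done"
  have UD: "U \<subseteq> D" using pD DM pp_Union U_def by blast
  have fE: "f \<in> E" and fU: "card (f \<inter> U) = 1" using f U_def by (auto simp: beta_def)
  have fD': "card (f \<inter> D) \<noteq> 1" using fD fE by (auto simp: beta_def)
  obtain p q where pq: "f = {p,q}" "p \<noteq> q" using E_card[OF fE] unfolding card_2_iff by blast
  have x: "(p\<in>U) \<noteq> (q\<in>U)" using fU unfolding pq(1) card_pair_int_1[OF pq(2)] .
  obtain a b where ab: "f = {a,b}" "a \<noteq> b" "a \<in> U" "b \<notin> U"
  proof (cases "p\<in>U")
    case True then show ?thesis using that[of p q] x pq by auto
  next
    case False then show ?thesis using that[of q p] x pq by auto
  qed
  have "b \<in> D"
  proof (rule ccontr)
    assume "b \<notin> D"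
    then have "f \<inter> D = {a}" using ab UD by auto
    then show False using fD' by simp
  qed
  then obtain S where S: "S \<in> M" "b \<in> S" using pp_Union[OF pD] by blast
  have SnD: "S \<notin> Done" using S ab U_def by blast
  have SU: "S \<inter> U = {}" using pp_disj_Union[OF pD S(1) DM SnD] U_def by simp
  obtain c d where cd: "S = {c,d}" "c \<noteq> d" using pp_card[OF pD S(1)] unfolding card_2_iff by blast
  obtain v where v: "S = {b,v}" "v \<noteq> b"
  proof (cases "b = c")
    case True then show ?thesis using that[of d] cd by auto
  next
    case False then show ?thesis using that[of c] cd S(2) by auto
  qed
  have vJ: "v \<in> J" using v pp_sub[OF pD S(1)] DJ by auto
  obtain e' where e': "e' \<in> E" "v \<in> e'" using E_cover[OF vJ] by blast
  have vU: "v \<notin> U" using SU v by auto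
  have "e' \<noteq> f"
  proof
    assume "e' = f" then have "v \<in> {a,b}" using e' ab by simp
    then show False using v vU ab by auto
  qed
  have bS: "beta E S = {f,e'}" using beta_pair[of b v f e'] v e' fE ab \<open>e'\<noteq>f\<close> by auto
  have "U \<union> S = sdiff U S" using SU by (auto simp: sdiff_def)
  then have bb: "beta E (\<Union>Done \<union> S) = sdiff (beta E (\<Union>Done)) {f,e'}" using bsd bS U_def by simp
  have SM: "S \<in> M - Done" using S SnD by blast
  have vS: "v \<in> S" using v by simp
  have SU': "S \<inter> \<Union>Done = {}" using SU U_def by simp
  show ?thesis
    apply (rule bexI[OF _ SM])
    apply (rule bexI[OF _ vS])
    apply (rule bexI[OF _ e'(1)])
    using e'(2) \<open>e'\<noteq>f\<close> SU' bb by blast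
qed

end

context ppJ begin

lemma pair_beta_card:
  assumes "S \<subseteq> J" "card S = 2" shows "card (beta E S) \<in> {0,2}"
proof -
  obtain p q where pq: "S={p,q}" "p\<noteq>q" using assms(2) unfolding card_2_iff by blast
  have "p\<in>J" "q\<in>J" using assms pq by auto
  then obtain e1 e2 where "e1\<in>E" "p\<in>e1" "e2\<in>E" "q\<in>e2" using E_cover by blast
  then show ?thesis using beta_pair[OF pq(2)] pq(1) by (cases "e1=e2") auto
qed

lemma fin_beta: "finite (beta E U)" using finE unfolding beta_def by simp

lemma Union_snoc: "\<Union>(set (ps@[S])) = \<Union>(set ps) \<union> S" by auto

lemma greedy0_aux:
  assumes pD: "pair_partition D M" and DJ: "D \<subseteq> J" and bD: "beta E D = {}"
  shows "distinct ps \<Longrightarrow> set ps \<subseteq> M \<Longrightarrow> card (beta E (\<Union>(set ps))) \<in> {0,2} \<Longrightarrow>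
     \<exists>qs. distinct (ps@qs) \<and> set (ps@qs) = M \<and> (\<forall>i\<le>length qs. card (beta E (\<Union>(set (ps @ take i qs)))) \<in> {0,2})"
proof (induction "card (M - set ps)" arbitrary: ps rule: less_induct)
  case less
  have finM: "finite M" using pp_fin[OF pD] finite_subset[OF DJ finJ] by blast
  show ?case
  proof (cases "set ps = M")
    case True then show ?thesis using less.prems by (intro exI[of _ "[]"]) auto
  next
    case False
    define U where "U = \<Union>(set ps)"
    obtain S where S: "S \<in> M - set ps" "card (beta E (U \<union> S)) \<in> {0,2}"
    proof (cases "beta E U = {}")
      case True
      obtain S where S1: "S \<in> M - set ps" using False less.prems(2) by blast
      have SU: "S \<inter> U = {}" using pp_disj_Union[OF pD _ less.prems(2)] S1 U_def by blast
      have "U \<union> S = sdiff U S" using SU by (auto simp: sdiff_def)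
      then have "beta E (U \<union> S) = beta E S" using bsd True by (simp add: sdiff_def)
      moreover have "card (beta E S) \<in> {0,2}"
        using pair_beta_card pp_card[OF pD] pp_sub[OF pD] DJ S1 by blast
      ultimately show ?thesis using that S1 by auto
    next
      case False
      then have c2: "card (beta E U) = 2" using less.prems(3) U_def fin_beta[of U] by auto
      then obtain f g where fg: "beta E U = {f,g}" "f\<noteq>g" unfolding card_2_iff by blast
      have fD: "f \<notin> beta E D" using bD by simp
      have fU: "f \<in> beta E (\<Union>(set ps))" using fg U_def by simp
      obtain S e' where Se: "S \<in> M - set ps" "e'\<noteq>f" "beta E (U \<union> S) = sdiff (beta E U) {f,e'}"
        using walk[OF pD DJ less.prems(2) fU fD] U_def by blast
      have "sdiff {f,g} {f,e'} = (if g = e' then {} else {g,e'})" using fg(2) Se(2) by (auto simp: sdiff_def)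
      then have "card (beta E (U \<union> S)) \<in> {0,2}" using Se(3) fg by (cases "g = e'") auto
      then show ?thesis using that Se(1) by blast
    qed
    have lt: "card (M - set (ps@[S])) < card (M - set ps)"
    proof -
      have "M - set (ps@[S]) = (M - set ps) - {S}" by auto
      moreover have "card ((M - set ps) - {S}) < card (M - set ps)"
        using S(1) finM by (intro card_Diff1_less) auto
      ultimately show ?thesis by simp
    qed
    have d: "distinct (ps@[S])" using less.prems(1) S(1) by auto
    have s: "set (ps@[S]) \<subseteq> M" using less.prems(2) S(1) by auto
    have c: "card (beta E (\<Union>(set (ps@[S])))) \<in> {0,2}" using S(2) U_def Union_snoc by metis
    obtain qs where qs: "distinct ((ps@[S])@qs)" "set ((ps@[S])@qs) = M"
       "\<forall>i\<le>length qs. card (beta E (\<Union>(set ((ps@[S]) @ take i qs)))) \<in> {0,2}"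
      using less.hyps[OF lt d s c] by blast
    show ?thesis
    proof (intro exI[of _ "S#qs"] conjI allI impI)
      show "distinct (ps @ S # qs)" using qs(1) by simp
      show "set (ps @ S # qs) = M" using qs(2) by simp
      fix i assume i: "i \<le> length (S#qs)"
      show "card (beta E (\<Union>(set (ps @ take i (S#qs))))) \<in> {0,2}"
      proof (cases i)
        case 0 then show ?thesis using less.prems(3) by simp
      next
        case (Suc j)
        then have "ps @ take i (S#qs) = (ps@[S]) @ take j qs" by simp
        moreover have "j \<le> length qs" using i Suc by simp
        ultimately show ?thesis using qs(3) by metis
      qed
    qed
  qed
qed

lemma greedy0:
  assumes pD: "pair_partition D M" and DJ: "D \<subseteq> J" and bD: "beta E D = {}"
  shows "\<exists>ps. distinct ps \<and> set ps = M \<and> (\<forall>i\<le>length ps. card (beta E (\<Union>(set (take i ps)))) \<in> {0,2})"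
  using greedy0_aux[OF assms, of "[]"] by simp


lemma greedy2_aux:
  assumes pD: "pair_partition D M" and DJ: "D \<subseteq> J" and bD: "beta E D = {e1,e2}" and e12: "e1 \<noteq> e2"
  shows "distinct ps \<Longrightarrow> set ps \<subseteq> M \<Longrightarrow> e1 \<in> beta E (\<Union>(set ps)) \<Longrightarrow> card (beta E (\<Union>(set ps))) = 2 \<Longrightarrow>
     \<exists>qs. distinct (ps@qs) \<and> set (ps@qs) \<subseteq> M \<and> beta E (\<Union>(set (ps@qs))) = {e1,e2} \<and>
       (\<forall>i\<le>length qs. e1 \<in> beta E (\<Union>(set (ps @ take i qs))) \<and> card (beta E (\<Union>(set (ps @ take i qs)))) = 2)"
proof (induction "card (M - set ps)" arbitrary: ps rule: less_induct)
  case less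
  have finM: "finite M" using pp_fin[OF pD] finite_subset[OF DJ finJ] by blast
  define U where "U = \<Union>(set ps)"
  obtain f where f: "beta E U = {e1,f}" "f \<noteq> e1"
  proof -
    obtain a b where ab: "beta E U = {a,b}" "a\<noteq>b" using less.prems(4) U_def unfolding card_2_iff by blast
    show ?thesis
    proof (cases "a = e1")
      case True then show ?thesis using that[of b] ab by auto
    next
      case False then show ?thesis using that[of a] ab less.prems(3) U_def by auto
    qed
  qed
  show ?case
  proof (cases "f = e2")
    case True then show ?thesis using less.prems f U_def by (intro exI[of _ "[]"]) auto
  next
    case False
    have fD: "f \<notin> beta E D" using bD False f(2) by simp
    have fU: "f \<in> beta E (\<Union>(set ps))" using f U_def by simp
    obtain S v e' where Se: "S \<in> M - set ps" "v \<in> S" "e' \<in> E" "v \<in> e'" "e'\<noteq>f" "S \<inter> U = {}"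
       "beta E (U \<union> S) = sdiff (beta E U) {f,e'}"
      using walk[OF pD DJ less.prems(2) fU fD] U_def by blast
    have "e' \<noteq> e1"
    proof
      assume ee: "e' = e1"
      have "e1 \<in> beta E U" using f by simp
      then have c1: "card (e1 \<inter> U) = 1" by (simp add: beta_def)
      then obtain u where u: "e1 \<inter> U = {u}" by (rule card_1_singletonE)
      have "e1 \<in> beta E D" using bD by simp
      then have c2: "card (e1 \<inter> D) = 1" by (simp add: beta_def)
      then obtain d where d: "e1 \<inter> D = {d}" by (rule card_1_singletonE)
      have UD: "U \<subseteq> D" using pp_Union[OF pD] less.prems(2) U_def by blast
      have vD: "v \<in> D" using Se(1,2) pp_sub[OF pD] by blast
      have "u = d" using u d UD by blast
      moreover have "v = d" using vD ee Se(4) d by blast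
      ultimately have "v \<in> U" using u by blast
      then show False using Se(2,6) by blast
    qed
    have bUS: "beta E (U \<union> S) = {e1,e'}" using Se(7) f \<open>e'\<noteq>e1\<close> Se(5) by (auto simp: sdiff_def)
    have lt: "card (M - set (ps@[S])) < card (M - set ps)"
    proof -
      have "M - set (ps@[S]) = (M - set ps) - {S}" by auto
      moreover have "card ((M - set ps) - {S}) < card (M - set ps)"
        using Se(1) finM by (intro card_Diff1_less) auto
      ultimately show ?thesis by simp
    qed
    have d: "distinct (ps@[S])" using less.prems(1) Se(1) by auto
    have s: "set (ps@[S]) \<subseteq> M" using less.prems(2) Se(1) by auto
    have c: "e1 \<in> beta E (\<Union>(set (ps@[S])))" "card (beta E (\<Union>(set (ps@[S])))) = 2"
      using bUS U_def Union_snoc[of ps S] \<open>e'\<noteq>e1\<close> by auto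
    obtain qs where qs: "distinct ((ps@[S])@qs)" "set ((ps@[S])@qs) \<subseteq> M"
       "beta E (\<Union>(set ((ps@[S])@qs))) = {e1,e2}"
       "\<forall>i\<le>length qs. e1 \<in> beta E (\<Union>(set ((ps@[S]) @ take i qs))) \<and> card (beta E (\<Union>(set ((ps@[S]) @ take i qs)))) = 2"
      using less.hyps[OF lt d s c] by blast
    show ?thesis
    proof (intro exI[of _ "S#qs"] conjI allI impI)
      show "distinct (ps @ S # qs)" using qs(1) by simp
      show "set (ps @ S # qs) \<subseteq> M" using qs(2) by simp
      show "beta E (\<Union>(set (ps @ S # qs))) = {e1,e2}" using qs(3) by simp
      fix i assume i: "i \<le> length (S#qs)"
      have "e1 \<in> beta E (\<Union>(set (ps @ take i (S#qs)))) \<and> card (beta E (\<Union>(set (ps @ take i (S#qs))))) = 2"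
      proof (cases i)
        case 0 then show ?thesis using less.prems(3,4) by simp
      next
        case (Suc j)
        then have "ps @ take i (S#qs) = (ps@[S]) @ take j qs" by simp
        moreover have "j \<le> length qs" using i Suc by simp
        ultimately show ?thesis using qs(4) by metis
      qed
      then show "e1 \<in> beta E (\<Union>(set (ps @ take i (S#qs))))" "card (beta E (\<Union>(set (ps @ take i (S#qs))))) = 2"
        by auto
    qed
  qed
qed


lemma sdiff_two: assumes "e1\<noteq>e2" "e1\<in>X" "card X = 2" shows "card (sdiff {e1,e2} X) \<in> {0,2}"
proof -
  obtain a b where ab: "X = {a,b}" "a\<noteq>b" using assms(3) unfolding card_2_iff by blast
  obtain f where f: "X = {e1,f}" "f\<noteq>e1"
  proof (cases "a = e1")
    case True then show ?thesis using that[of b] ab by auto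
  next
    case False then show ?thesis using that[of a] ab assms(2) by auto
  qed
  show ?thesis
  proof (cases "f = e2")
    case True then show ?thesis using f by (simp add: sdiff_def)
  next
    case False
    then have "sdiff {e1,e2} X = {e2,f}" using f assms(1) by (auto simp: sdiff_def)
    then show ?thesis using False by simp
  qed
qed

lemma greedy2:
  assumes pD: "pair_partition D M" and DJ: "D \<subseteq> J" and cD: "card (beta E D) = 2"
  shows "\<exists>ps. distinct ps \<and> set ps \<subseteq> M \<and> beta E (\<Union>(set ps)) = beta E D \<and>
    (\<forall>i\<le>length ps. card (beta E (\<Union>(set (take i ps)))) \<in> {0,2} \<and>
                     card (sdiff (beta E D) (beta E (\<Union>(set (take i ps))))) \<in> {0,2})"
proof -
  obtain e1 e2 where bD: "beta E D = {e1,e2}" "e1\<noteq>e2" using cD unfolding card_2_iff by blast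
  have "e1 \<in> beta E D" using bD by simp
  then have e1E: "e1 \<in> E" and c: "card (e1 \<inter> D) = 1" by (auto simp: beta_def)
  obtain d where d: "e1 \<inter> D = {d}" using c by (rule card_1_singletonE)
  have "d \<in> D" using d by blast
  then obtain S where S: "S \<in> M" "d \<in> S" using pp_Union[OF pD] by blast
  obtain a b where ab: "S = {a,b}" "a \<noteq> b" using pp_card[OF pD S(1)] unfolding card_2_iff by blast
  obtain v where v: "S = {d,v}" "v \<noteq> d"
  proof (cases "d = a")
    case True then show ?thesis using that[of b] ab by auto
  next
    case False then show ?thesis using that[of a] ab S(2) by auto
  qed
  have vD: "v \<in> D" using v pp_sub[OF pD S(1)] by auto
  then have "v \<in> J" using DJ by auto
  then obtain e' where e': "e' \<in> E" "v \<in> e'" using E_cover by blast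
  have "e' \<noteq> e1"
  proof
    assume "e' = e1" then have "v \<in> e1 \<inter> D" using e' vD by simp
    then show False using d v(2) by simp
  qed
  have dE: "d \<in> e1" using d by blast
  have bS: "beta E S = {e1,e'}" using beta_pair[OF v(2)[symmetric] dE e'(2) e1E e'(1)] v(1) \<open>e'\<noteq>e1\<close> by auto
  have "distinct [S]" "set [S] \<subseteq> M" "e1 \<in> beta E (\<Union>(set [S]))" "card (beta E (\<Union>(set [S]))) = 2"
    using S(1) bS \<open>e'\<noteq>e1\<close> by auto
  from greedy2_aux[OF pD DJ bD this] obtain qs where qs:
    "distinct ([S]@qs)" "set ([S]@qs) \<subseteq> M" "beta E (\<Union>(set ([S]@qs))) = {e1,e2}"
    "\<forall>i\<le>length qs. e1 \<in> beta E (\<Union>(set ([S] @ take i qs))) \<and> card (beta E (\<Union>(set ([S] @ take i qs)))) = 2"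
    by blast
  show ?thesis
  proof (intro exI[of _ "S#qs"] conjI allI impI)
    show "distinct (S#qs)" using qs(1) by simp
    show "set (S#qs) \<subseteq> M" using qs(2) by simp
    show "beta E (\<Union>(set (S#qs))) = beta E D" using qs(3) bD by simp
    fix i assume i: "i \<le> length (S#qs)"
    have "card (beta E (\<Union>(set (take i (S#qs))))) \<in> {0,2} \<and>
          card (sdiff {e1,e2} (beta E (\<Union>(set (take i (S#qs)))))) \<in> {0,2}"
    proof (cases i)
      case 0 then show ?thesis using bD(2) by (simp add: sdiff_def)
    next
      case (Suc j)
      then have "take i (S#qs) = [S] @ take j qs" by simp
      moreover have "j \<le> length qs" using i Suc by simp
      ultimately have "e1 \<in> beta E (\<Union>(set (take i (S#qs))))" "card (beta E (\<Union>(set (take i (S#qs))))) = 2"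
        using qs(4) by metis+
      then show ?thesis using sdiff_two[OF bD(2)] by simp
    qed
    then show "card (beta E (\<Union>(set (take i (S#qs))))) \<in> {0,2}"
       "card (sdiff (beta E D) (beta E (\<Union>(set (take i (S#qs)))))) \<in> {0,2}" using bD by auto
  qed
qed

end

lemma Match_iff: "M \<in> Match D \<longleftrightarrow> pair_partition D M" by (simp add: Match_def)

lemma sdiff_Un_disj: "A \<inter> S = {} \<Longrightarrow> sdiff x (A \<union> S) = sdiff (sdiff x A) S"
  by (auto simp: sdiff_def)
lemma sdiff_cancel: "sdiff (sdiff x A) (sdiff y A) = sdiff x y" by (auto simp: sdiff_def)
lemma sdiff_sdiff: "sdiff (sdiff x A) A = x" by (auto simp: sdiff_def)
lemma sdiff_sdiff2: "sdiff x (sdiff x A) = A" by (auto simp: sdiff_def)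
lemma sdiff_comm: "sdiff x y = sdiff y x" by (auto simp: sdiff_def)
lemma sdiff_sub: "x \<subseteq> J \<Longrightarrow> A \<subseteq> J \<Longrightarrow> sdiff x A \<subseteq> J" by (auto simp: sdiff_def)

lemma nth_notin_take: assumes "distinct ps" "i < length ps" shows "ps ! i \<notin> set (take i ps)"
proof -
  have e: "take i ps @ ps!i # drop (Suc i) ps = ps" by (rule id_take_nth_drop[OF assms(2), symmetric])
  have "distinct (take i ps @ ps!i # drop (Suc i) ps)" unfolding e by (rule assms(1))
  then show ?thesis by simp
qed

lemma take_Suc_Union: "i < length ps \<Longrightarrow> \<Union>(set (take (Suc i) ps)) = \<Union>(set (take i ps)) \<union> ps ! i"
  by (simp add: take_Suc_conv_app_nth Un_commute)

locale chain = ppJ J E for J :: "'a set" and E +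
  fixes F :: "'a set \<Rightarrow> rat" and B :: "'a set \<Rightarrow> 'a set \<Rightarrow> 'a set set \<Rightarrow> rat"
  assumes n2: "card J \<ge> 2"
  and Fnn: "\<And>x. x \<subseteq> J \<Longrightarrow> F x \<ge> 0"
  and Bnn: "\<And>x y M. x\<subseteq>J \<Longrightarrow> y\<subseteq>J \<Longrightarrow> M \<in> Match (sdiff x y) \<Longrightarrow> B x y M \<ge> 0"
  and EW1: "\<And>x y. x\<subseteq>J \<Longrightarrow> y\<subseteq>J \<Longrightarrow> F x * F y = (\<Sum>M\<in>Match (sdiff x y). B x y M)"
  and EW2: "\<And>x y M S. x\<subseteq>J \<Longrightarrow> y\<subseteq>J \<Longrightarrow> M \<in> Match (sdiff x y) \<Longrightarrow> S\<in>M \<Longrightarrow>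
              B x y M = B (sdiff x S) (sdiff y S) M"
  and Om0ne: "Omega_k J E F 0 \<noteq> {}"
begin

abbreviation "Om \<equiv> Omega J E F"
abbreviation "Om0 \<equiv> Omega_k J E F 0"
abbreviation "Om2 \<equiv> Omega_k J E F 2"
definition "Fr x = real_of_rat (F x)"
definition "Br x y M = real_of_rat (B x y M)"
abbreviation "n \<equiv> card J"

lemma isk: "is_k_assignment E k x \<longleftrightarrow> card (beta E x) = k"
  by (simp add: is_k_assignment_def beta_def)

lemma Om_iff: "x \<in> Om \<longleftrightarrow> x \<subseteq> J \<and> F x > 0 \<and> card (beta E x) \<in> {0,2}"
  by (auto simp: Omega_def Omega_k_def isk)
lemma Om0_iff: "x \<in> Om0 \<longleftrightarrow> x \<subseteq> J \<and> F x > 0 \<and> beta E x = {}"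
  using fin_beta by (auto simp: Omega_def Omega_k_def isk)
lemma Om2_iff: "x \<in> Om2 \<longleftrightarrow> x \<subseteq> J \<and> F x > 0 \<and> card (beta E x) = 2"
  by (auto simp: Omega_def Omega_k_def isk)
lemma Om_Un: "Om = Om0 \<union> Om2" by (simp add: Omega_def)
lemma Om_disj: "Om0 \<inter> Om2 = {}" by (auto simp: Omega_k_def isk)
lemma Om_sub: "Om \<subseteq> Pow J" using Om_iff by blast
lemma finOm: "finite Om" using Om_sub finJ finite_subset by blast
lemma finOm0: "finite Om0" using finOm Om_Un by auto
lemma finOm2: "finite Om2" using finOm Om_Un by auto

lemma Fr_pos: "x \<in> Om \<Longrightarrow> Fr x > 0" using Om_iff by (simp add: Fr_def)
lemma Fr_nn: "x \<subseteq> J \<Longrightarrow> Fr x \<ge> 0" using Fnn by (simp add: Fr_def)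
lemma Br_nn: "x\<subseteq>J \<Longrightarrow> y\<subseteq>J \<Longrightarrow> M \<in> Match (sdiff x y) \<Longrightarrow> Br x y M \<ge> 0"
  using Bnn by (simp add: Br_def)

lemma finMatch: "D \<subseteq> J \<Longrightarrow> finite (Match D)"
proof -
  assume "D \<subseteq> J"
  then have "finite D" using finJ finite_subset by blast
  moreover have "Match D \<subseteq> Pow (Pow D)" using pp_sub by (auto simp: Match_def)
  ultimately show ?thesis using finite_subset by blast
qed

lemma EW1r: assumes "x\<subseteq>J" "y\<subseteq>J" shows "Fr x * Fr y = (\<Sum>M\<in>Match (sdiff x y). Br x y M)"
proof -
  have "real_of_rat (F x * F y) = real_of_rat (\<Sum>M\<in>Match (sdiff x y). B x y M)" using EW1[OF assms] by simp
  then show ?thesis by (simp add: Fr_def Br_def of_rat_mult of_rat_sum)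
qed

lemma Br_le: assumes "x\<subseteq>J" "y\<subseteq>J" "M \<in> Match (sdiff x y)" shows "Br x y M \<le> Fr x * Fr y"
proof -
  have "finite (Match (sdiff x y))" using assms(1,2) by (intro finMatch sdiff_sub)
  then have "Br x y M \<le> (\<Sum>M\<in>Match (sdiff x y). Br x y M)"
    using assms by (intro member_le_sum) (auto intro: Br_nn)
  then show ?thesis using EW1r assms by simp
qed

lemma Br_pos_F: assumes "x\<subseteq>J" "y\<subseteq>J" "M \<in> Match (sdiff x y)" "Br x y M > 0"
  shows "F x > 0" "F y > 0"
proof -
  have "Fr x * Fr y > 0" using Br_le[OF assms(1-3)] assms(4) by linarith
  moreover have "Fr x \<ge> 0" "Fr y \<ge> 0" using assms Fr_nn by auto
  ultimately have "Fr x > 0" "Fr y > 0" by (auto simp: zero_less_mult_iff)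
  then show "F x > 0" "F y > 0" by (auto simp: Fr_def)
qed

lemma inv_list:
  assumes xJ: "x\<subseteq>J" and yJ: "y\<subseteq>J" and M: "M \<in> Match (sdiff x y)" and d: "distinct ps"
    and s: "set ps \<subseteq> M"
  shows "i \<le> length ps \<Longrightarrow> B x y M = B (sdiff x (\<Union>(set (take i ps)))) (sdiff y (\<Union>(set (take i ps)))) M
      \<and> sdiff x (\<Union>(set (take i ps))) \<subseteq> J \<and> sdiff y (\<Union>(set (take i ps))) \<subseteq> J"
proof (induction i)
  case 0 then show ?case using xJ yJ by (simp add: sdiff_def)
next
  case (Suc i)
  have pM: "pair_partition (sdiff x y) M" using M Match_iff by blast
  have il: "i < length ps" using Suc.prems by simp
  define U where "U = \<Union>(set (take i ps))"
  have IH: "B x y M = B (sdiff x U) (sdiff y U) M" "sdiff x U \<subseteq> J" "sdiff y U \<subseteq> J"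
    using Suc U_def by auto
  have SM: "ps ! i \<in> M" using s il by auto
  have tM: "set (take i ps) \<subseteq> M" using set_take_subset[of i ps] s by (rule subset_trans)
  have dj: "U \<inter> ps ! i = {}" using pp_disj_Union[OF pM SM tM nth_notin_take[OF d il]] U_def by (simp add: Int_commute)
  have eq: "\<Union>(set (take (Suc i) ps)) = U \<union> ps ! i" using take_Suc_Union[OF il] U_def by simp
  have M': "M \<in> Match (sdiff (sdiff x U) (sdiff y U))" using M by (simp add: sdiff_cancel)
  have "B (sdiff x U) (sdiff y U) M = B (sdiff (sdiff x U) (ps!i)) (sdiff (sdiff y U) (ps!i)) M"
    by (rule EW2[OF IH(2,3) M' SM])
  moreover have "ps ! i \<subseteq> J" using pp_sub[OF pM SM] xJ yJ by (auto simp: sdiff_def)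
  moreover have "sdiff x (U \<union> ps!i) = sdiff (sdiff x U) (ps!i)" "sdiff y (U \<union> ps!i) = sdiff (sdiff y U) (ps!i)"
    using sdiff_Un_disj[OF dj] by auto
  moreover have "sdiff (sdiff x U) (ps!i) \<subseteq> J" "sdiff (sdiff y U) (ps!i) \<subseteq> J"
    using IH(2,3) \<open>ps ! i \<subseteq> J\<close> sdiff_sub by blast+
  ultimately show ?case using IH(1) unfolding eq by simp
qed

end

lemma wcs:
  fixes w a :: "'b \<Rightarrow> real"
  assumes fin: "finite A" and w: "\<And>i. i\<in>A \<Longrightarrow> w i \<ge> 0"
  shows "(\<Sum>i\<in>A. w i * a i)^2 \<le> (\<Sum>i\<in>A. w i) * (\<Sum>i\<in>A. w i * (a i)^2)"
proof -
  define W where "W = (\<Sum>i\<in>A. w i)"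
  define S where "S = (\<Sum>i\<in>A. w i * a i)"
  define T where "T = (\<Sum>i\<in>A. w i * (a i)^2)"
  have "0 \<le> (\<Sum>i\<in>A. w i * (W * a i - S)^2)" using w by (intro sum_nonneg) auto
  also have "\<dots> = (\<Sum>i\<in>A. W^2 * (w i * (a i)^2) - (2*W*S) * (w i * a i) + S^2 * w i)"
    by (intro sum.cong refl) (simp add: power2_diff power_mult_distrib right_diff_distrib distrib_left mult.assoc mult.left_commute)
  also have "\<dots> = W^2 * T - (2*W*S) * S + S^2 * W"
    unfolding T_def S_def W_def by (simp add: sum.distrib sum_subtractf sum_distrib_left)
  also have "\<dots> = W * (W * T - S^2)" by (simp add: power2_eq_square algebra_simps)
  finally have *: "0 \<le> W * (W * T - S^2)" .
  have W0: "W \<ge> 0" unfolding W_def using w by (intro sum_nonneg) auto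
  show ?thesis
  proof (cases "W = 0")
    case True
    then have "\<forall>i\<in>A. w i = 0" using sum_nonneg_eq_0_iff[OF fin w] W_def by simp
    then have "S = 0" unfolding S_def by simp
    then show ?thesis using True unfolding S_def[symmetric] W_def[symmetric] T_def[symmetric] by simp
  next
    case False
    then have "W > 0" using W0 by simp
    then have "W * T - S^2 \<ge> 0" using * by (simp add: zero_le_mult_iff)
    then show ?thesis unfolding S_def[symmetric] W_def[symmetric] T_def[symmetric] by linarith
  qed
qed

lemma cs_sum:
  fixes a :: "'b \<Rightarrow> real"
  assumes "finite A"
  shows "(\<Sum>i\<in>A. a i)^2 \<le> real (card A) * (\<Sum>i\<in>A. (a i)^2)"
  using wcs[OF assms, of "\<lambda>_. 1" a] by simp

lemma zstep:
  assumes pD: "pair_partition D M" and d: "distinct ps" and s: "set ps \<subseteq> M" and il: "i < length ps"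
  shows "sdiff x (\<Union>(set (take (Suc i) ps))) = sdiff (sdiff x (\<Union>(set (take i ps)))) (ps ! i)"
proof -
  have SM: "ps ! i \<in> M" using s il by auto
  have tM: "set (take i ps) \<subseteq> M" using set_take_subset[of i ps] s by (rule subset_trans)
  have dj: "\<Union>(set (take i ps)) \<inter> ps ! i = {}"
    using pp_disj_Union[OF pD SM tM nth_notin_take[OF d il]] by (simp add: Int_commute)
  show ?thesis unfolding take_Suc_Union[OF il] using sdiff_Un_disj[OF dj] .
qed


definition Up :: "'a set list \<Rightarrow> nat \<Rightarrow> 'a set" where "Up ps i = \<Union>(set (take i ps))"

lemma sum_Sig: "finite A \<Longrightarrow> (\<And>x. x\<in>A \<Longrightarrow> finite (Bs x)) \<Longrightarrow>
   (\<Sum>(x,y)\<in>Sigma A Bs. g x y) = (\<Sum>x\<in>A. \<Sum>y\<in>Bs x. g x y)"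
  by (simp add: sum.Sigma)

context chain begin

definition "Z = (\<Sum>w\<in>Om. Fr w)"
definition "Qf h = (\<Sum>z\<in>Om. \<Sum>z'\<in>Om. if hdist z z' = 2 then min (Fr z) (Fr z') * (h z - h z')^2 else 0)"

lemma Om_J: "x \<in> Om \<Longrightarrow> x \<subseteq> J" using Om_iff by blast
lemma finMatch_sd: "x \<subseteq> J \<Longrightarrow> y \<subseteq> J \<Longrightarrow> finite (Match (sdiff x y))"
  by (rule finMatch[OF sdiff_sub])

lemma sum_Match_Om: assumes z: "z \<subseteq> J"
  shows "(\<Sum>(w,M)\<in>Sigma Om (\<lambda>w. Match (sdiff z w)). Br z w M) = Fr z * Z"
proof -
  have "(\<Sum>(w,M)\<in>Sigma Om (\<lambda>w. Match (sdiff z w)). Br z w M) = (\<Sum>w\<in>Om. \<Sum>M\<in>Match (sdiff z w). Br z w M)"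
    using finOm finMatch_sd z Om_J by (intro sum_Sig) auto
  also have "\<dots> = (\<Sum>w\<in>Om. Fr z * Fr w)" using EW1r z Om_J by (intro sum.cong refl) auto
  also have "\<dots> = Fr z * Z" by (simp add: Z_def sum_distrib_left)
  finally show ?thesis .
qed

lemma finSig: "z \<subseteq> J \<Longrightarrow> finite (Sigma Om (\<lambda>w. Match (sdiff z w)))"
  using finOm finMatch_sd Om_J by (intro finite_SigmaI) auto

lemma Br_nn_Sig: assumes "z \<subseteq> J" "q \<in> Sigma Om (\<lambda>w. Match (sdiff z w))"
  shows "0 \<le> (case q of (w,M) \<Rightarrow> Br z w M)"
proof -
  obtain w M where q: "q = (w,M)" by (cases q)
  have "w \<in> Om" "M \<in> Match (sdiff z w)" using assms(2) q by auto
  then show ?thesis using Br_nn[OF assms(1) Om_J] q by simp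
qed

definition "Wset z S = {(w,M). w\<in>Om \<and> sdiff w S \<in> Om \<and> M \<in> Match (sdiff z w) \<and> S \<in> M}"

lemma inner_bound:
  assumes z: "z \<in> Om" and zS: "sdiff z S \<in> Om"
  shows "(\<Sum>(w,M)\<in>Wset z S. Br z w M) \<le> min (Fr z) (Fr (sdiff z S)) * Z"
proof -
  define z' where "z' = sdiff z S"
  have zJ: "z \<subseteq> J" and z'J: "z' \<subseteq> J" using z zS Om_J z'_def by auto
  have sub1: "Wset z S \<subseteq> Sigma Om (\<lambda>w. Match (sdiff z w))" by (auto simp: Wset_def)
  have fin1: "finite (Wset z S)" using finite_subset[OF sub1 finSig[OF zJ]] .
  have b1: "(\<Sum>(w,M)\<in>Wset z S. Br z w M) \<le> Fr z * Z"
  proof -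
    have "(\<Sum>(w,M)\<in>Wset z S. Br z w M) \<le> (\<Sum>(w,M)\<in>Sigma Om (\<lambda>w. Match (sdiff z w)). Br z w M)"
      using sub1 finSig[OF zJ] Br_nn_Sig[OF zJ] by (intro sum_mono2) auto
    then show ?thesis using sum_Match_Om[OF zJ] by simp
  qed
  define chi where "chi = (\<lambda>(w::'a set, M::'a set set). (sdiff w S, M))"
  have inj: "inj_on chi (Wset z S)"
  proof (rule inj_onI)
    fix p q assume pq: "chi p = chi q"
    obtain w M where p: "p = (w,M)" by (cases p)
    obtain w' M' where q: "q = (w',M')" by (cases q)
    have e: "sdiff w S = sdiff w' S" "M = M'" using pq p q by (auto simp: chi_def)
    have "w = sdiff (sdiff w S) S" by (simp add: sdiff_sdiff)
    also have "\<dots> = w'" unfolding e(1) by (simp add: sdiff_sdiff)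
    finally show "p = q" using p q e(2) by simp
  qed
  have sub2: "chi ` Wset z S \<subseteq> Sigma Om (\<lambda>w. Match (sdiff z' w))"
    unfolding chi_def Wset_def z'_def by (auto simp: sdiff_cancel)
  have "(\<Sum>(w,M)\<in>Wset z S. Br z w M) = (\<Sum>(w,M)\<in>Wset z S. Br z' (sdiff w S) M)"
  proof (intro sum.cong refl)
    fix q assume q: "q \<in> Wset z S"
    obtain w M where wM: "q = (w,M)" by (cases q)
    have "w \<in> Om" "M \<in> Match (sdiff z w)" "S \<in> M" using q wM by (auto simp: Wset_def)
    then have "B z w M = B z' (sdiff w S) M" using EW2[OF zJ Om_J] z'_def by blast
    then show "(case q of (w,M) \<Rightarrow> Br z w M) = (case q of (w,M) \<Rightarrow> Br z' (sdiff w S) M)"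
      using wM by (simp add: Br_def)
  qed
  also have "\<dots> = (\<Sum>(w,M)\<in>chi ` Wset z S. Br z' w M)"
    using sum.reindex[OF inj, of "\<lambda>(w,M). Br z' w M"] unfolding chi_def by (simp add: case_prod_beta)
  also have "\<dots> \<le> (\<Sum>(w,M)\<in>Sigma Om (\<lambda>w. Match (sdiff z' w)). Br z' w M)"
    using sub2 finSig[OF z'J] Br_nn_Sig[OF z'J] by (intro sum_mono2) auto
  also have "\<dots> = Fr z' * Z" using sum_Match_Om[OF z'J] .
  finally have b2: "(\<Sum>(w,M)\<in>Wset z S. Br z w M) \<le> Fr z' * Z" .
  show ?thesis using b1 b2 z'_def by (simp add: min_def)
qed


definition "Edg = {(z,S). z \<in> Om \<and> sdiff z S \<in> Om \<and> S \<subseteq> J \<and> card S = 2}"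

lemma finEdg: "finite Edg"
proof -
  have "Edg \<subseteq> Om \<times> Pow J" by (auto simp: Edg_def)
  then show ?thesis using finOm finJ finite_subset by blast
qed

lemma min_nn: "z \<in> Om \<Longrightarrow> z' \<in> Om \<Longrightarrow> 0 \<le> min (Fr z) (Fr z')"
  using Fr_pos by (simp add: less_imp_le)

lemma edg_to_Q:
  "(\<Sum>(z,S)\<in>Edg. min (Fr z) (Fr (sdiff z S)) * (h z - h (sdiff z S))^2) \<le> Qf h"
proof -
  define g where "g = (\<lambda>(z::'a set,z'::'a set). if hdist z z' = 2 then min (Fr z) (Fr z') * (h z - h z')^2 else 0)"
  define psi where "psi = (\<lambda>(z::'a set,S::'a set). (z, sdiff z S))"
  have Q: "Qf h = (\<Sum>q\<in>Om \<times> Om. g q)"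
    unfolding Qf_def g_def by (simp add: sum.cartesian_product)
  have inj: "inj_on psi Edg"
  proof (rule inj_onI)
    fix p q assume pq: "psi p = psi q"
    obtain z S where p: "p = (z,S)" by (cases p)
    obtain z' S' where q: "q = (z',S')" by (cases q)
    have e: "z = z'" "sdiff z S = sdiff z' S'" using pq p q by (auto simp: psi_def)
    have "S = sdiff z (sdiff z S)" by (simp add: sdiff_sdiff2)
    also have "\<dots> = sdiff z' (sdiff z' S')" using e by simp
    also have "\<dots> = S'" by (simp add: sdiff_sdiff2)
    finally show "p = q" using p q e(1) by simp
  qed
  have "(\<Sum>(z,S)\<in>Edg. min (Fr z) (Fr (sdiff z S)) * (h z - h (sdiff z S))^2) = (\<Sum>q\<in>Edg. g (psi q))"
  proof (intro sum.cong refl)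
    fix q assume q: "q \<in> Edg"
    obtain z S where zS: "q = (z,S)" by (cases q)
    have "card S = 2" using q zS by (simp add: Edg_def)
    then have "hdist z (sdiff z S) = 2" by (simp add: hdist_def sdiff_sdiff2)
    then show "(case q of (z,S) \<Rightarrow> min (Fr z) (Fr (sdiff z S)) * (h z - h (sdiff z S))^2) = g (psi q)"
      using zS by (simp add: g_def psi_def)
  qed
  also have "\<dots> = (\<Sum>q\<in>psi ` Edg. g q)" using sum.reindex[OF inj, of g] by simp
  also have "\<dots> \<le> (\<Sum>q\<in>Om \<times> Om. g q)"
  proof (rule sum_mono2)
    show "finite (Om \<times> Om)" using finOm by simp
    show "psi ` Edg \<subseteq> Om \<times> Om" by (auto simp: psi_def Edg_def)
    fix q assume "q \<in> Om \<times> Om - psi ` Edg"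
    then obtain z z' where "q = (z,z')" "z \<in> Om" "z' \<in> Om" by auto
    then show "0 \<le> g q" using min_nn[of z z'] by (simp add: g_def)
  qed
  finally show ?thesis using Q by simp
qed

lemma path_ineq:
  assumes L: "2 * length ps \<le> n"
  shows "(h x - h (sdiff x (Up ps (length ps))))^2 \<le>
     real n / 2 * (\<Sum>i<length ps. (h (sdiff x (Up ps i)) - h (sdiff x (Up ps (Suc i))))^2)"
proof -
  define L where "L = length ps"
  define a where "a = (\<lambda>i. h (sdiff x (Up ps i)))"
  have a0: "a 0 = h x" by (simp add: a_def Up_def sdiff_def)
  have "h x - h (sdiff x (Up ps L)) = (\<Sum>i<L. a i - a (Suc i))"
    using sum_lessThan_telescope'[of a L] a0 by (simp add: a_def)
  then have "(h x - h (sdiff x (Up ps L)))^2 \<le> real (card {..<L}) * (\<Sum>i<L. (a i - a (Suc i))^2)"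
    using cs_sum[of "{..<L}" "\<lambda>i. a i - a (Suc i)"] by simp
  also have "\<dots> \<le> real n / 2 * (\<Sum>i<L. (a i - a (Suc i))^2)"
  proof (rule mult_right_mono)
    show "real (card {..<L}) \<le> real n / 2" using L L_def by simp
    show "0 \<le> (\<Sum>i<L. (a i - a (Suc i))^2)" by (intro sum_nonneg) simp
  qed
  finally show ?thesis by (simp add: a_def L_def)
qed

lemma len_bound:
  assumes M: "M \<in> Match D" and DJ: "D \<subseteq> J" and d: "distinct ps" and s: "set ps \<subseteq> M"
  shows "2 * length ps \<le> n"
proof -
  have pM: "pair_partition D M" using M Match_iff by blast
  have finD: "finite D" using DJ finJ finite_subset by blast
  have finM: "finite M" using pp_fin[OF pM finD] .
  have "length ps = card (set ps)" using distinct_card[OF d] by simp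
  also have "\<dots> \<le> card M" using card_mono[OF finM s] .
  finally have l: "length ps \<le> card M" .
  have pw: "pairwise disjnt M" using pp_disj[OF pM] unfolding pairwise_def disjnt_def by blast
  have "card (\<Union>M) = (\<Sum>S\<in>M. card S)"
    using card_Union_disjoint[OF pw] pp_sub[OF pM] finD finite_subset by blast
  also have "\<dots> = (\<Sum>S\<in>M. 2)" using pp_card[OF pM] by simp
  also have "\<dots> = 2 * card M" by simp
  finally have c: "card D = 2 * card M" using pp_Union[OF pM] by simp
  have "card D \<le> n" using card_mono[OF finJ DJ] .
  then show ?thesis using l c by simp
qed

end

context chain begin

lemma triple_facts:
  assumes xJ: "x \<subseteq> J" and yJ: "y \<subseteq> J" and M: "M \<in> Match (sdiff x y)" and pos: "Br x y M > 0"
   and d: "distinct ps" and s: "set ps \<subseteq> M"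
   and g: "\<forall>i\<le>length ps. card (beta E (sdiff x (Up ps i))) \<in> {0,2} \<and> card (beta E (sdiff y (Up ps i))) \<in> {0,2}"
   and i: "i \<le> length ps"
  shows "sdiff x (Up ps i) \<in> Om \<and> sdiff y (Up ps i) \<in> Om \<and> Br (sdiff x (Up ps i)) (sdiff y (Up ps i)) M = Br x y M"
proof -
  define x' where "x' = sdiff x (Up ps i)"
  define y' where "y' = sdiff y (Up ps i)"
  have il: "B x y M = B x' y' M" "x' \<subseteq> J" "y' \<subseteq> J"
    using inv_list[OF xJ yJ M d s i] unfolding x'_def y'_def Up_def by auto
  have Br': "Br x' y' M = Br x y M" using il(1) by (simp add: Br_def)
  have M': "M \<in> Match (sdiff x' y')" using M unfolding x'_def y'_def by (simp add: sdiff_cancel)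
  have pos': "Br x' y' M > 0" using pos Br' by simp
  have "F x' > 0" "F y' > 0" using Br_pos_F[OF il(2,3) M' pos'] by auto
  moreover have "card (beta E x') \<in> {0,2}" "card (beta E y') \<in> {0,2}" using g i x'_def y'_def by auto
  ultimately have "x' \<in> Om" "y' \<in> Om" using il(2,3) Om_iff by auto
  then show ?thesis using Br' x'_def y'_def by simp
qed

lemma congestion:
  fixes T :: "('a set \<times> 'a set \<times> 'a set set) set" and Pth :: "'a set \<Rightarrow> 'a set set \<Rightarrow> 'a set list"
  assumes T: "\<And>x y M. (x,y,M) \<in> T \<Longrightarrow> x \<subseteq> J \<and> y \<subseteq> J \<and> M \<in> Match (sdiff x y) \<and> Br x y M > 0"
  and good: "\<And>x y M. (x,y,M) \<in> T \<Longrightarrow> distinct (Pth (sdiff x y) M) \<and> set (Pth (sdiff x y) M) \<subseteq> M \<and>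
       (\<forall>i \<le> length (Pth (sdiff x y) M). card (beta E (sdiff x (Up (Pth (sdiff x y) M) i))) \<in> {0,2} \<and>
                                         card (beta E (sdiff y (Up (Pth (sdiff x y) M) i))) \<in> {0,2})"
  shows "(\<Sum>(x,y,M)\<in>T. Br x y M * (h x - h (sdiff x (Up (Pth (sdiff x y) M) (length (Pth (sdiff x y) M)))))^2)
          \<le> real n / 2 * Z * Qf h"
proof -
  define X where "X = (\<lambda>t::'a set \<times> 'a set \<times> 'a set set. fst t)"
  define Y where "Y = (\<lambda>t::'a set \<times> 'a set \<times> 'a set set. fst (snd t))"
  define MM where "MM = (\<lambda>t::'a set \<times> 'a set \<times> 'a set set. snd (snd t))"
  define p where "p = (\<lambda>t. Pth (sdiff (X t) (Y t)) (MM t))"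
  define L where "L = (\<lambda>t. length (p t))"
  define zz where "zz = (\<lambda>t i. sdiff (X t) (Up (p t) i))"
  define ww where "ww = (\<lambda>t i. sdiff (Y t) (Up (p t) i))"
  define bt where "bt = (\<lambda>t. Br (X t) (Y t) (MM t))"
  define d where "d = (\<lambda>t i. (h (zz t i) - h (zz t (Suc i)))^2)"
  have tr: "(X t, Y t, MM t) = t" for t by (simp add: X_def Y_def MM_def)
  have tT: "X t \<subseteq> J \<and> Y t \<subseteq> J \<and> MM t \<in> Match (sdiff (X t) (Y t)) \<and> bt t > 0" if "t \<in> T" for t
    using T[of "X t" "Y t" "MM t"] that tr bt_def by simp
  have tg: "distinct (p t) \<and> set (p t) \<subseteq> MM t \<and>
       (\<forall>i \<le> L t. card (beta E (zz t i)) \<in> {0,2} \<and> card (beta E (ww t i)) \<in> {0,2})" if "t \<in> T" for t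
    using good[of "X t" "Y t" "MM t"] that tr unfolding p_def L_def zz_def ww_def by simp
  have tf: "zz t i \<in> Om \<and> ww t i \<in> Om \<and> Br (zz t i) (ww t i) (MM t) = bt t" if "t \<in> T" "i \<le> L t" for t i
  proof -
    have a: "X t \<subseteq> J" "Y t \<subseteq> J" "MM t \<in> Match (sdiff (X t) (Y t))" "bt t > 0" using tT[OF that(1)] by auto
    have b: "distinct (p t)" "set (p t) \<subseteq> MM t"
      "\<forall>i\<le>length (p t). card (beta E (sdiff (X t) (Up (p t) i))) \<in> {0,2} \<and> card (beta E (sdiff (Y t) (Up (p t) i))) \<in> {0,2}"
      using tg[OF that(1)] unfolding L_def zz_def ww_def by auto
    show ?thesis using triple_facts[OF a(1,2,3) _ b(1,2,3), of i] a(4) that(2)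
      unfolding zz_def ww_def bt_def L_def by simp
  qed
  have tstep: "zz t (Suc i) = sdiff (zz t i) (p t ! i) \<and> ww t (Suc i) = sdiff (ww t i) (p t ! i)"
    if "t \<in> T" "i < L t" for t i
  proof -
    have pD: "pair_partition (sdiff (X t) (Y t)) (MM t)" using tT[OF that(1)] Match_iff by blast
    have b: "distinct (p t)" "set (p t) \<subseteq> MM t" using tg[OF that(1)] by auto
    have il: "i < length (p t)" using that(2) L_def by simp
    show ?thesis using zstep[OF pD b il, of "X t"] zstep[OF pD b il, of "Y t"]
      unfolding zz_def ww_def Up_def by simp
  qed
  have tlen: "2 * L t \<le> n" if "t \<in> T" for t
  proof -
    have a: "MM t \<in> Match (sdiff (X t) (Y t))" "sdiff (X t) (Y t) \<subseteq> J"
      using tT[OF that] sdiff_sub[of "X t" J "Y t"] by auto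
    show ?thesis using len_bound[OF a] tg[OF that] L_def by simp
  qed
  have finT: "finite T"
  proof -
    have "T \<subseteq> Pow J \<times> Pow J \<times> Pow (Pow J)"
    proof
      fix t assume t: "t \<in> T"
      have DJ: "sdiff (X t) (Y t) \<subseteq> J" using tT[OF t] sdiff_sub[of "X t" J "Y t"] by simp
      have pM: "pair_partition (sdiff (X t) (Y t)) (MM t)" using tT[OF t] by (simp add: Match_iff)
      have "MM t \<subseteq> Pow J"
      proof
        fix S assume "S \<in> MM t"
        then have "S \<subseteq> sdiff (X t) (Y t)" by (rule pp_sub[OF pM])
        then show "S \<in> Pow J" using DJ by auto
      qed
      then have "(X t, Y t, MM t) \<in> Pow J \<times> Pow J \<times> Pow (Pow J)" using tT[OF t] by auto
      then show "t \<in> Pow J \<times> Pow J \<times> Pow (Pow J)" unfolding tr .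
    qed
    then show ?thesis by (rule finite_subset) (simp add: finJ)
  qed
  have lhs: "(\<Sum>(x,y,M)\<in>T. Br x y M * (h x - h (sdiff x (Up (Pth (sdiff x y) M) (length (Pth (sdiff x y) M)))))^2)
      = (\<Sum>t\<in>T. bt t * (h (X t) - h (zz t (L t)))^2)"
    by (intro sum.cong refl) (simp add: case_prod_beta X_def Y_def MM_def bt_def zz_def L_def p_def)
  have s1: "(\<Sum>t\<in>T. bt t * (h (X t) - h (zz t (L t)))^2) \<le> (\<Sum>t\<in>T. bt t * (real n / 2 * (\<Sum>i<L t. d t i)))"
  proof (rule sum_mono)
    fix t assume t: "t\<in>T"
    have "(h (X t) - h (zz t (L t)))^2 \<le> real n / 2 * (\<Sum>i<L t. d t i)"
      using path_ineq[OF tlen[OF t, unfolded L_def], of h "X t"] unfolding d_def zz_def L_def by simp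
    then show "bt t * (h (X t) - h (zz t (L t)))^2 \<le> bt t * (real n / 2 * (\<Sum>i<L t. d t i))"
      using tT[OF t] by (intro mult_left_mono) auto
  qed
  have s2: "(\<Sum>t\<in>T. bt t * (real n / 2 * (\<Sum>i<L t. d t i))) = real n / 2 * (\<Sum>t\<in>T. \<Sum>i<L t. bt t * d t i)"
    unfolding sum_distrib_left by (intro sum.cong refl) (simp add: mult_ac)
  define Sg where "Sg = Sigma T (\<lambda>t. {..<L t})"
  have s3: "(\<Sum>t\<in>T. \<Sum>i<L t. bt t * d t i) = (\<Sum>(t,i)\<in>Sg. bt t * d t i)"
    unfolding Sg_def using finT by (intro sum_Sig[symmetric]) auto
  define phi where "phi = (\<lambda>(t,i). ((zz t i, p t ! i), (ww t i, MM t)))"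
  define G where "G = (\<lambda>q::('a set \<times> 'a set) \<times> ('a set \<times> 'a set set).
      Br (fst (fst q)) (fst (snd q)) (snd (snd q)) * (h (fst (fst q)) - h (sdiff (fst (fst q)) (snd (fst q))))^2)"
  have eqG: "(case q of (t,i) \<Rightarrow> bt t * d t i) = G (phi q)" if q: "q \<in> Sg" for q
  proof -
    obtain t i where ti: "q = (t,i)" by (cases q)
    have t: "t \<in> T" and i: "i < L t" using q ti Sg_def by auto
    have a: "Br (zz t i) (ww t i) (MM t) = bt t" using tf[OF t] i by simp
    have b: "zz t (Suc i) = sdiff (zz t i) (p t ! i)" using tstep[OF t i] by simp
    show ?thesis using a b ti unfolding G_def phi_def d_def by simp
  qed
  have inj: "inj_on phi Sg"
  proof (rule inj_onI)
    fix q1 q2 assume q1: "q1 \<in> Sg" and q2: "q2 \<in> Sg" and e: "phi q1 = phi q2"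
    obtain t i where ti: "q1 = (t,i)" by (cases q1)
    obtain t' i' where ti': "q2 = (t',i')" by (cases q2)
    have t: "t \<in> T" and i: "i < L t" using q1 ti Sg_def by auto
    have t': "t' \<in> T" and i': "i' < L t'" using q2 ti' Sg_def by auto
    have e1: "zz t i = zz t' i'" "p t ! i = p t' ! i'" "ww t i = ww t' i'" "MM t = MM t'"
      using e ti ti' by (auto simp: phi_def)
    have "sdiff (X t) (Y t) = sdiff (zz t i) (ww t i)" unfolding zz_def ww_def by (simp add: sdiff_cancel)
    also have "\<dots> = sdiff (zz t' i') (ww t' i')" using e1 by simp
    also have "\<dots> = sdiff (X t') (Y t')" unfolding zz_def ww_def by (simp add: sdiff_cancel)
    finally have D: "sdiff (X t) (Y t) = sdiff (X t') (Y t')" .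
    have pp: "p t = p t'" unfolding p_def using D e1(4) by simp
    have dist: "distinct (p t)" using tg[OF t] by simp
    have ii: "i = i'" using nth_eq_iff_index_eq[OF dist] i i' e1(2) pp L_def by auto
    have "X t = sdiff (zz t i) (Up (p t) i)" unfolding zz_def by (simp add: sdiff_sdiff)
    also have "\<dots> = sdiff (zz t' i') (Up (p t') i')" using e1(1) pp ii by simp
    also have "\<dots> = X t'" unfolding zz_def by (simp add: sdiff_sdiff)
    finally have xx: "X t = X t'" .
    have "Y t = sdiff (ww t i) (Up (p t) i)" unfolding ww_def by (simp add: sdiff_sdiff)
    also have "\<dots> = sdiff (ww t' i') (Up (p t') i')" using e1(3) pp ii by simp
    also have "\<dots> = Y t'" unfolding ww_def by (simp add: sdiff_sdiff)
    finally have yy: "Y t = Y t'" .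
    have "t = t'" using tr[of t] tr[of t'] xx yy e1(4) by metis
    then show "q1 = q2" using ti ti' ii by simp
  qed
  have s4: "(\<Sum>(t,i)\<in>Sg. bt t * d t i) = (\<Sum>q\<in>phi ` Sg. G q)"
  proof -
    have "(\<Sum>(t,i)\<in>Sg. bt t * d t i) = (\<Sum>q\<in>Sg. G (phi q))" using eqG by (intro sum.cong refl) auto
    also have "\<dots> = (\<Sum>q\<in>phi ` Sg. G q)" using sum.reindex[OF inj, of G] by simp
    finally show ?thesis .
  qed
  define WW where "WW = (\<lambda>e::'a set \<times> 'a set. Wset (fst e) (snd e))"
  define SigE where "SigE = Sigma Edg WW"
  have finWW: "finite (WW e)" if "e \<in> Edg" for e
  proof -
    have "fst e \<in> Om" using that by (auto simp: Edg_def)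
    then have zJ: "fst e \<subseteq> J" by (rule Om_J)
    have "WW e \<subseteq> Sigma Om (\<lambda>w. Match (sdiff (fst e) w))" by (auto simp: WW_def Wset_def)
    then show ?thesis using finSig[OF zJ] finite_subset by blast
  qed
  have finSigE: "finite SigE" unfolding SigE_def using finEdg finWW by (intro finite_SigmaI) auto
  have sub: "phi ` Sg \<subseteq> SigE"
  proof
    fix q assume "q \<in> phi ` Sg"
    then obtain t i where ti: "(t,i) \<in> Sg" "q = phi (t,i)" by auto
    have t: "t \<in> T" and i: "i < L t" using ti Sg_def by auto
    have f1: "zz t i \<in> Om" "ww t i \<in> Om" using tf[OF t] i by auto
    have f2: "zz t (Suc i) \<in> Om" "ww t (Suc i) \<in> Om" using tf[OF t, of "Suc i"] i by auto
    have st: "zz t (Suc i) = sdiff (zz t i) (p t ! i)" "ww t (Suc i) = sdiff (ww t i) (p t ! i)"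
      using tstep[OF t i] by auto
    have pM: "pair_partition (sdiff (X t) (Y t)) (MM t)" using tT[OF t] by (simp add: Match_iff)
    have SM: "p t ! i \<in> MM t" using tg[OF t] i L_def by auto
    have DJ: "sdiff (X t) (Y t) \<subseteq> J" using tT[OF t] sdiff_sub[of "X t" J "Y t"] by simp
    have SJ: "p t ! i \<subseteq> J" using pp_sub[OF pM SM] DJ by simp
    have S2: "card (p t ! i) = 2" using pp_card[OF pM SM] .
    have MD: "MM t \<in> Match (sdiff (zz t i) (ww t i))" using tT[OF t] unfolding zz_def ww_def by (simp add: sdiff_cancel)
    have "(zz t i, p t ! i) \<in> Edg" using f1 f2 st SJ S2 by (simp add: Edg_def)
    moreover have "(ww t i, MM t) \<in> WW (zz t i, p t ! i)" using f1 f2 st SM MD by (simp add: WW_def Wset_def)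
    ultimately show "q \<in> SigE" using ti(2) by (simp add: SigE_def phi_def)
  qed
  have Gnn: "0 \<le> G q" if "q \<in> SigE" for q
  proof -
    obtain z S w M where q: "q = ((z,S),(w,M))" by (cases q) auto
    have "z \<in> Om" "w \<in> Om" "M \<in> Match (sdiff z w)" using that q by (auto simp: SigE_def Edg_def WW_def Wset_def)
    then have "0 \<le> Br z w M" using Br_nn Om_J by blast
    then show ?thesis using q by (simp add: G_def)
  qed
  have s5: "(\<Sum>q\<in>phi ` Sg. G q) \<le> (\<Sum>q\<in>SigE. G q)"
    using sub finSigE Gnn by (intro sum_mono2) auto
  have s6: "(\<Sum>q\<in>SigE. G q) = (\<Sum>e\<in>Edg. \<Sum>q\<in>WW e. G (e,q))"
    unfolding SigE_def using sum.Sigma[of Edg WW "\<lambda>e q. G (e,q)"] finEdg finWW by simp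
  have s7: "(\<Sum>q\<in>WW e. G (e,q)) \<le> Z * (min (Fr (fst e)) (Fr (sdiff (fst e) (snd e))) * (h (fst e) - h (sdiff (fst e) (snd e)))^2)"
    if e: "e \<in> Edg" for e
  proof -
    obtain z S where zS: "e = (z,S)" by (cases e)
    have zO: "z \<in> Om" "sdiff z S \<in> Om" using e zS by (auto simp: Edg_def)
    have "(\<Sum>q\<in>WW e. G (e,q)) = (h z - h (sdiff z S))^2 * (\<Sum>(w,M)\<in>Wset z S. Br z w M)"
      unfolding sum_distrib_left zS WW_def G_def by (intro sum.cong refl) (auto simp: mult_ac)
    also have "\<dots> \<le> (h z - h (sdiff z S))^2 * (min (Fr z) (Fr (sdiff z S)) * Z)"
      using inner_bound[OF zO] by (intro mult_left_mono) auto
    finally show ?thesis using zS by (simp add: mult_ac)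
  qed
  have s8: "(\<Sum>e\<in>Edg. \<Sum>q\<in>WW e. G (e,q)) \<le> Z * Qf h"
  proof -
    have "(\<Sum>e\<in>Edg. \<Sum>q\<in>WW e. G (e,q)) \<le> (\<Sum>e\<in>Edg. Z * (min (Fr (fst e)) (Fr (sdiff (fst e) (snd e))) * (h (fst e) - h (sdiff (fst e) (snd e)))^2))"
      using s7 by (intro sum_mono) auto
    also have "\<dots> = Z * (\<Sum>(z,S)\<in>Edg. min (Fr z) (Fr (sdiff z S)) * (h z - h (sdiff z S))^2)"
      by (simp add: sum_distrib_left case_prod_beta)
    also have "\<dots> \<le> Z * Qf h"
    proof (rule mult_left_mono)
      show "0 \<le> Z" unfolding Z_def using Fr_pos by (intro sum_nonneg) (simp add: less_imp_le)
    qed (rule edg_to_Q)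
    finally show ?thesis .
  qed
  have "(\<Sum>t\<in>T. bt t * (h (X t) - h (zz t (L t)))^2) \<le> real n / 2 * (Z * Qf h)"
  proof -
    have "(\<Sum>t\<in>T. \<Sum>i<L t. bt t * d t i) \<le> Z * Qf h" using s3 s4 s5 s6 s8 by linarith
    then have "real n / 2 * (\<Sum>t\<in>T. \<Sum>i<L t. bt t * d t i) \<le> real n / 2 * (Z * Qf h)"
      by (intro mult_left_mono) auto
    then show ?thesis using s1 s2 by linarith
  qed
  then show ?thesis using lhs by (simp add: mult_ac)
qed
  
end

lemma sum_triple:
  assumes "finite A" "finite B" "\<And>x y. x\<in>A \<Longrightarrow> y\<in>B \<Longrightarrow> finite (C x y)"
  shows "(\<Sum>x\<in>A. \<Sum>y\<in>B. \<Sum>M\<in>C x y. g x y M) = (\<Sum>(x,y,M)\<in>Sigma A (\<lambda>x. Sigma B (\<lambda>y. C x y)). g x y M)"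
proof -
  have "(\<Sum>x\<in>A. \<Sum>y\<in>B. \<Sum>M\<in>C x y. g x y M) = (\<Sum>x\<in>A. \<Sum>(y,M)\<in>Sigma B (\<lambda>y. C x y). g x y M)"
    using assms by (intro sum.cong refl sum_Sig[symmetric]) auto
  also have "\<dots> = (\<Sum>(x,q)\<in>Sigma A (\<lambda>x. Sigma B (\<lambda>y. C x y)). case q of (y,M) \<Rightarrow> g x y M)"
    using assms by (intro sum_Sig[symmetric]) (auto intro: finite_SigmaI)
  finally show ?thesis by simp
qed

context chain begin

definition "Pth0 D M = (SOME ps. distinct ps \<and> set ps = M \<and> (\<forall>i\<le>length ps. card (beta E (Up ps i)) \<in> {0,2}))"
definition "Pth2 D M = (SOME ps. distinct ps \<and> set ps \<subseteq> M \<and> beta E (Up ps (length ps)) = beta E D \<and>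
   (\<forall>i\<le>length ps. card (beta E (Up ps i)) \<in> {0,2} \<and> card (sdiff (beta E D) (beta E (Up ps i))) \<in> {0,2}))"

lemma Pth0_good:
  assumes "M \<in> Match D" "D \<subseteq> J" "beta E D = {}"
  shows "distinct (Pth0 D M) \<and> set (Pth0 D M) = M \<and> (\<forall>i\<le>length (Pth0 D M). card (beta E (Up (Pth0 D M) i)) \<in> {0,2})"
proof -
  have "\<exists>ps. distinct ps \<and> set ps = M \<and> (\<forall>i\<le>length ps. card (beta E (Up ps i)) \<in> {0,2})"
    using greedy0[of D M] assms unfolding Up_def by (simp add: Match_iff)
  then show ?thesis unfolding Pth0_def by (rule someI_ex)
qed

lemma Pth2_good:
  assumes "M \<in> Match D" "D \<subseteq> J" "card (beta E D) = 2"
  shows "distinct (Pth2 D M) \<and> set (Pth2 D M) \<subseteq> M \<and> beta E (Up (Pth2 D M) (length (Pth2 D M))) = beta E D \<and>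
   (\<forall>i\<le>length (Pth2 D M). card (beta E (Up (Pth2 D M) i)) \<in> {0,2} \<and> card (sdiff (beta E D) (beta E (Up (Pth2 D M) i))) \<in> {0,2})"
proof -
  have "\<exists>ps. distinct ps \<and> set ps \<subseteq> M \<and> beta E (Up ps (length ps)) = beta E D \<and>
   (\<forall>i\<le>length ps. card (beta E (Up ps i)) \<in> {0,2} \<and> card (sdiff (beta E D) (beta E (Up ps i))) \<in> {0,2})"
    using greedy2[of D M] assms unfolding Up_def by (simp add: Match_iff)
  then show ?thesis unfolding Pth2_def by (rule someI_ex)
qed

lemma Om0_J: "x \<in> Om0 \<Longrightarrow> x \<subseteq> J" using Om0_iff by blast
lemma Om2_J: "x \<in> Om2 \<Longrightarrow> x \<subseteq> J" using Om2_iff by blast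

lemma R0_bound: "(\<Sum>x\<in>Om0. \<Sum>y\<in>Om0. Fr x * Fr y * (h x - h y)^2) \<le> real n / 2 * Z * Qf h"
proof -
  define A0 where "A0 = Sigma Om0 (\<lambda>x. Sigma Om0 (\<lambda>y. Match (sdiff x y)))"
  define T0 where "T0 = {t\<in>A0. Br (fst t) (fst (snd t)) (snd (snd t)) > 0}"
  have finA0: "finite A0" unfolding A0_def using finOm0 finMatch_sd Om0_J by (intro finite_SigmaI) auto
  have "(\<Sum>x\<in>Om0. \<Sum>y\<in>Om0. Fr x * Fr y * (h x - h y)^2) = (\<Sum>x\<in>Om0. \<Sum>y\<in>Om0. \<Sum>M\<in>Match (sdiff x y). Br x y M * (h x - h y)^2)"
    using EW1r Om0_J by (intro sum.cong refl) (simp add: sum_distrib_right)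
  also have "\<dots> = (\<Sum>(x,y,M)\<in>A0. Br x y M * (h x - h y)^2)"
    unfolding A0_def using finOm0 finMatch_sd Om0_J by (intro sum_triple) auto
  also have "\<dots> = (\<Sum>(x,y,M)\<in>T0. Br x y M * (h x - h y)^2)"
  proof (rule sum.mono_neutral_right[OF finA0])
    show "T0 \<subseteq> A0" unfolding T0_def by auto
    show "\<forall>i\<in>A0 - T0. (case i of (x, y, M) \<Rightarrow> Br x y M * (h x - h y)\<^sup>2) = 0"
    proof
      fix t assume t: "t \<in> A0 - T0"
      obtain x y M where xyM: "t = (x,y,M)" by (cases t) auto
      have "x \<in> Om0" "y \<in> Om0" "M \<in> Match (sdiff x y)" "\<not> Br x y M > 0" using t xyM by (auto simp: A0_def T0_def)
      moreover have "Br x y M \<ge> 0" using Br_nn Om0_J calculation by blast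
      ultimately have "Br x y M = 0" by simp
      then show "(case t of (x, y, M) \<Rightarrow> Br x y M * (h x - h y)\<^sup>2) = 0" using xyM by simp
    qed
  qed
  also have "\<dots> = (\<Sum>(x,y,M)\<in>T0. Br x y M * (h x - h (sdiff x (Up (Pth0 (sdiff x y) M) (length (Pth0 (sdiff x y) M)))))^2)"
  proof (intro sum.cong refl)
    fix t assume t: "t \<in> T0"
    obtain x y M where xyM: "t = (x,y,M)" by (cases t) auto
    have xy: "x \<in> Om0" "y \<in> Om0" and M: "M \<in> Match (sdiff x y)" using t xyM by (auto simp: A0_def T0_def)
    have DJ: "sdiff x y \<subseteq> J" using sdiff_sub[of x J y] Om0_J xy by simp
    have bD: "beta E (sdiff x y) = {}" using xy Om0_iff bsd by (simp add: sdiff_def)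
    have g: "set (Pth0 (sdiff x y) M) = M" using Pth0_good[OF M DJ bD] by simp
    have "Up (Pth0 (sdiff x y) M) (length (Pth0 (sdiff x y) M)) = \<Union>M" using g by (simp add: Up_def)
    also have "\<dots> = sdiff x y" using M pp_Union by (simp add: Match_iff)
    finally have "sdiff x (Up (Pth0 (sdiff x y) M) (length (Pth0 (sdiff x y) M))) = y" by (simp add: sdiff_sdiff2)
    then show "(case t of (x, y, M) \<Rightarrow> Br x y M * (h x - h y)\<^sup>2) =
      (case t of (x, y, M) \<Rightarrow> Br x y M * (h x - h (sdiff x (Up (Pth0 (sdiff x y) M) (length (Pth0 (sdiff x y) M)))))\<^sup>2)"
      using xyM by simp
  qed
  also have "\<dots> \<le> real n / 2 * Z * Qf h"
  proof (rule congestion)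
    fix x y M assume t: "(x,y,M) \<in> T0"
    have xy: "x \<in> Om0" "y \<in> Om0" and M: "M \<in> Match (sdiff x y)" and pos: "Br x y M > 0"
      using t by (auto simp: A0_def T0_def)
    show "x \<subseteq> J \<and> y \<subseteq> J \<and> M \<in> Match (sdiff x y) \<and> Br x y M > 0" using xy M pos Om0_J by auto
    have DJ: "sdiff x y \<subseteq> J" using sdiff_sub[of x J y] Om0_J xy by simp
    have bx: "beta E x = {}" "beta E y = {}" using xy Om0_iff by auto
    have bD: "beta E (sdiff x y) = {}" using bx bsd by (simp add: sdiff_def)
    have g: "distinct (Pth0 (sdiff x y) M) \<and> set (Pth0 (sdiff x y) M) = M \<and>
      (\<forall>i\<le>length (Pth0 (sdiff x y) M). card (beta E (Up (Pth0 (sdiff x y) M) i)) \<in> {0,2})"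
      using Pth0_good[OF M DJ bD] .
    have "beta E (sdiff x U) = beta E U" "beta E (sdiff y U) = beta E U" for U using bx bsd by (simp_all add: sdiff_def)
    then show "distinct (Pth0 (sdiff x y) M) \<and> set (Pth0 (sdiff x y) M) \<subseteq> M \<and>
       (\<forall>i \<le> length (Pth0 (sdiff x y) M). card (beta E (sdiff x (Up (Pth0 (sdiff x y) M) i))) \<in> {0,2} \<and>
                                         card (beta E (sdiff y (Up (Pth0 (sdiff x y) M) i))) \<in> {0,2})"
      using g by simp
  qed
  finally show ?thesis .
qed


definition "A2 = Sigma Om2 (\<lambda>a. Sigma Om0 (\<lambda>x. Match (sdiff a x)))"
definition "T2 = {t\<in>A2. Br (fst t) (fst (snd t)) (snd (snd t)) > 0}"
definition "UL a x M = Up (Pth2 (sdiff a x) M) (length (Pth2 (sdiff a x) M))"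

lemma finA2: "finite A2" unfolding A2_def using finOm0 finOm2 finMatch_sd Om0_J Om2_J by (intro finite_SigmaI) auto

lemma T2_good:
  assumes a: "a \<in> Om2" and x: "x \<in> Om0" and M: "M \<in> Match (sdiff a x)"
  shows "distinct (Pth2 (sdiff a x) M) \<and> set (Pth2 (sdiff a x) M) \<subseteq> M \<and>
       (\<forall>i \<le> length (Pth2 (sdiff a x) M). card (beta E (sdiff a (Up (Pth2 (sdiff a x) M) i))) \<in> {0,2} \<and>
                                         card (beta E (sdiff x (Up (Pth2 (sdiff a x) M) i))) \<in> {0,2})"
    and "beta E (UL a x M) = beta E a"
proof -
  have DJ: "sdiff a x \<subseteq> J" using sdiff_sub[of a J x] Om0_J Om2_J a x by simp
  have bx: "beta E x = {}" using x Om0_iff by auto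
  have bD: "beta E (sdiff a x) = beta E a" using bx bsd by (simp add: sdiff_def)
  have c2: "card (beta E (sdiff a x)) = 2" using bD a Om2_iff by simp
  have g: "distinct (Pth2 (sdiff a x) M) \<and> set (Pth2 (sdiff a x) M) \<subseteq> M \<and> beta E (UL a x M) = beta E (sdiff a x) \<and>
   (\<forall>i\<le>length (Pth2 (sdiff a x) M). card (beta E (Up (Pth2 (sdiff a x) M) i)) \<in> {0,2} \<and>
      card (sdiff (beta E (sdiff a x)) (beta E (Up (Pth2 (sdiff a x) M) i))) \<in> {0,2})"
    using Pth2_good[OF M DJ c2] unfolding UL_def .
  have "beta E (sdiff a U) = sdiff (beta E a) (beta E U)" for U
    by (rule bsd)
  moreover have "beta E (sdiff x U) = beta E U" for U
  proof -
    have "beta E (sdiff x U) = sdiff (beta E x) (beta E U)" by (rule bsd)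
    also have "\<dots> = beta E U" unfolding bx by (simp add: sdiff_def)
    finally show ?thesis .
  qed
  ultimately show "distinct (Pth2 (sdiff a x) M) \<and> set (Pth2 (sdiff a x) M) \<subseteq> M \<and>
       (\<forall>i \<le> length (Pth2 (sdiff a x) M). card (beta E (sdiff a (Up (Pth2 (sdiff a x) M) i))) \<in> {0,2} \<and>
                                         card (beta E (sdiff x (Up (Pth2 (sdiff a x) M) i))) \<in> {0,2})"
    using g unfolding bD by simp
  show "beta E (UL a x M) = beta E a" using g unfolding bD by simp
qed

lemma T2_mem: "t \<in> T2 \<Longrightarrow> fst t \<in> Om2 \<and> fst (snd t) \<in> Om0 \<and> snd (snd t) \<in> Match (sdiff (fst t) (fst (snd t)))
   \<and> Br (fst t) (fst (snd t)) (snd (snd t)) > 0"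
  by (auto simp: T2_def A2_def)

lemma R2_bound: "(\<Sum>(a,x,M)\<in>T2. Br a x M * (h a - h (sdiff a (UL a x M)))^2) \<le> real n / 2 * Z * Qf h"
  unfolding UL_def
proof (rule congestion)
  fix a x M assume t: "(a,x,M) \<in> T2"
  have a: "a \<in> Om2" "x \<in> Om0" "M \<in> Match (sdiff a x)" "Br a x M > 0" using T2_mem[OF t] by auto
  show "a \<subseteq> J \<and> x \<subseteq> J \<and> M \<in> Match (sdiff a x) \<and> Br a x M > 0" using a Om0_J Om2_J by auto
  show "distinct (Pth2 (sdiff a x) M) \<and> set (Pth2 (sdiff a x) M) \<subseteq> M \<and>
       (\<forall>i \<le> length (Pth2 (sdiff a x) M). card (beta E (sdiff a (Up (Pth2 (sdiff a x) M) i))) \<in> {0,2} \<and>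
                                         card (beta E (sdiff x (Up (Pth2 (sdiff a x) M) i))) \<in> {0,2})"
    using T2_good(1)[OF a(1,2,3)] .
qed

lemma T2_img:
  assumes t: "(a,x,M) \<in> T2"
  shows "sdiff a (UL a x M) \<in> Om0 \<and> sdiff x (UL a x M) \<in> Om2 \<and> M \<in> Match (sdiff (sdiff a (UL a x M)) (sdiff x (UL a x M)))
     \<and> Br (sdiff a (UL a x M)) (sdiff x (UL a x M)) M = Br a x M"
proof -
  have a: "a \<in> Om2" "x \<in> Om0" "M \<in> Match (sdiff a x)" "Br a x M > 0" using T2_mem[OF t] by auto
  have g: "distinct (Pth2 (sdiff a x) M)" "set (Pth2 (sdiff a x) M) \<subseteq> M"
     "\<forall>i \<le> length (Pth2 (sdiff a x) M). card (beta E (sdiff a (Up (Pth2 (sdiff a x) M) i))) \<in> {0,2} \<and>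
                                         card (beta E (sdiff x (Up (Pth2 (sdiff a x) M) i))) \<in> {0,2}"
    using T2_good(1)[OF a(1,2,3)] by auto
  have f: "sdiff a (UL a x M) \<in> Om \<and> sdiff x (UL a x M) \<in> Om \<and> Br (sdiff a (UL a x M)) (sdiff x (UL a x M)) M = Br a x M"
    using triple_facts[OF Om2_J[OF a(1)] Om0_J[OF a(2)] a(3) a(4) g, of "length (Pth2 (sdiff a x) M)"] unfolding UL_def by simp
  have bU: "beta E (UL a x M) = beta E a" using T2_good(2)[OF a(1,2,3)] .
  have bx: "beta E x = {}" using a(2) Om0_iff by auto
  have b1: "beta E (sdiff a (UL a x M)) = {}" using bU bsd by (simp add: sdiff_def)
  have b2: "card (beta E (sdiff x (UL a x M))) = 2" using bU bx bsd a(1) Om2_iff by (simp add: sdiff_def)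
  have "sdiff a (UL a x M) \<in> Om0" using f b1 Om0_iff Om_iff by auto
  moreover have "sdiff x (UL a x M) \<in> Om2" using f b2 Om2_iff Om_iff by auto
  moreover have "M \<in> Match (sdiff (sdiff a (UL a x M)) (sdiff x (UL a x M)))" using a(3) by (simp add: sdiff_cancel)
  ultimately show ?thesis using f by simp
qed

end

lemma ineq32: fixes u v :: real shows "(u+v)^2 \<le> 3/2*u^2 + 3*v^2"
proof -
  have "0 \<le> (u-2*v)^2" by simp
  then show ?thesis by (simp add: power2_eq_square algebra_simps)
qed
lemma dsum_id: fixes F u :: "'a \<Rightarrow> real" shows
 "(\<Sum>x\<in>A. \<Sum>y\<in>A. F x * F y * (u x - u y)^2)
   = 2 * (\<Sum>x\<in>A. F x) * (\<Sum>x\<in>A. F x * (u x)^2) - 2 * (\<Sum>x\<in>A. F x * u x) * (\<Sum>x\<in>A. F x * u x)"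
proof -
  have "(\<Sum>x\<in>A. \<Sum>y\<in>A. F x * F y * (u x - u y)^2) = (\<Sum>x\<in>A. \<Sum>y\<in>A. (F x * (u x)^2) * F y + F x * (F y * (u y)^2) - 2 * ((F x * u x) * (F y * u y)))"
    by (intro sum.cong refl) (simp add: power2_diff algebra_simps)
  also have "\<dots> = (\<Sum>x\<in>A. \<Sum>y\<in>A. (F x * (u x)^2) * F y) + (\<Sum>x\<in>A. \<Sum>y\<in>A. F x * (F y * (u y)^2)) - 2 * (\<Sum>x\<in>A. \<Sum>y\<in>A. (F x * u x) * (F y * u y))"
    by (simp add: sum.distrib sum_subtractf sum_distrib_left)
  also have "\<dots> = (\<Sum>x\<in>A. F x * (u x)^2) * (\<Sum>y\<in>A. F y) + (\<Sum>x\<in>A. F x) * (\<Sum>y\<in>A. F y * (u y)^2) - 2 * ((\<Sum>x\<in>A. F x * u x) * (\<Sum>y\<in>A. F y * u y))"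
    by (simp only: sum_product)
  finally show ?thesis by (simp add: algebra_simps)
qed

context chain begin

definition "Z0 = (\<Sum>x\<in>Om0. Fr x)"
definition "Z2 = (\<Sum>x\<in>Om2. Fr x)"

lemma S2_eq: "Z0 * (\<Sum>a\<in>Om2. Fr a * g a) = (\<Sum>(a,x,M)\<in>T2. Br a x M * g a)"
proof -
  have "Z0 * (\<Sum>a\<in>Om2. Fr a * g a) = (\<Sum>a\<in>Om2. \<Sum>x\<in>Om0. Fr a * Fr x * g a)"
    unfolding Z0_def sum_distrib_left sum_distrib_right by (intro sum.cong refl) (simp add: mult_ac)
  also have "\<dots> = (\<Sum>a\<in>Om2. \<Sum>x\<in>Om0. \<Sum>M\<in>Match (sdiff a x). Br a x M * g a)"
    using EW1r Om0_J Om2_J by (intro sum.cong refl) (simp add: sum_distrib_right)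
  also have "\<dots> = (\<Sum>(a,x,M)\<in>A2. Br a x M * g a)"
    unfolding A2_def using finOm0 finOm2 finMatch_sd Om0_J Om2_J by (intro sum_triple) auto
  also have "\<dots> = (\<Sum>(a,x,M)\<in>T2. Br a x M * g a)"
  proof (rule sum.mono_neutral_right[OF finA2])
    show "T2 \<subseteq> A2" unfolding T2_def by auto
    show "\<forall>i\<in>A2 - T2. (case i of (a, x, M) \<Rightarrow> Br a x M * g a) = 0"
    proof
      fix t assume t: "t \<in> A2 - T2"
      obtain a x M where xyM: "t = (a,x,M)" by (cases t) auto
      have "a \<in> Om2" "x \<in> Om0" "M \<in> Match (sdiff a x)" "\<not> Br a x M > 0" using t xyM by (auto simp: A2_def T2_def)
      moreover have "Br a x M \<ge> 0" using Br_nn[OF Om2_J Om0_J] calculation by blast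
      ultimately have "Br a x M = 0" by simp
      then show "(case t of (a, x, M) \<Rightarrow> Br a x M * g a) = 0" using xyM by simp
    qed
  qed
  finally show ?thesis .
qed

lemma W_bound:
  assumes gnn: "\<And>b. b \<in> Om0 \<Longrightarrow> g b \<ge> 0"
  shows "(\<Sum>(a,x,M)\<in>T2. Br a x M * g (sdiff a (UL a x M))) \<le> Z2 * (\<Sum>b\<in>Om0. Fr b * g b)"
proof -
  define psi where "psi = (\<lambda>(a,x,M). (sdiff a (UL a x M), sdiff x (UL a x M), M))"
  define A2' where "A2' = Sigma Om0 (\<lambda>b. Sigma Om2 (\<lambda>y. Match (sdiff b y)))"
  have finA2': "finite A2'" unfolding A2'_def using finOm0 finOm2 finMatch_sd Om0_J Om2_J by (intro finite_SigmaI) auto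
  have inj: "inj_on psi T2"
  proof (rule inj_onI)
    fix t1 t2 assume t1: "t1 \<in> T2" and t2: "t2 \<in> T2" and e: "psi t1 = psi t2"
    obtain a x M where p1: "t1 = (a,x,M)" by (cases t1) auto
    obtain a2 x2 M2 where p2: "t2 = (a2,x2,M2)" by (cases t2) auto
    have e1: "sdiff a (UL a x M) = sdiff a2 (UL a2 x2 M2)" "sdiff x (UL a x M) = sdiff x2 (UL a2 x2 M2)" "M = M2"
      using e p1 p2 by (auto simp: psi_def)
    have "sdiff a x = sdiff (sdiff a (UL a x M)) (sdiff x (UL a x M))" by (simp add: sdiff_cancel)
    also have "\<dots> = sdiff (sdiff a2 (UL a2 x2 M2)) (sdiff x2 (UL a2 x2 M2))" using e1 by simp
    also have "\<dots> = sdiff a2 x2" by (simp add: sdiff_cancel)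
    finally have D: "sdiff a x = sdiff a2 x2" .
    have U: "UL a x M = UL a2 x2 M2" unfolding UL_def using D e1(3) by simp
    have "a = sdiff (sdiff a (UL a x M)) (UL a x M)" by (simp add: sdiff_sdiff)
    also have "\<dots> = sdiff (sdiff a2 (UL a2 x2 M2)) (UL a2 x2 M2)" using e1(1) U by simp
    also have "\<dots> = a2" by (simp add: sdiff_sdiff)
    finally have aa: "a = a2" .
    have "x = sdiff (sdiff x (UL a x M)) (UL a x M)" by (simp add: sdiff_sdiff)
    also have "\<dots> = sdiff (sdiff x2 (UL a2 x2 M2)) (UL a2 x2 M2)" using e1(2) U by simp
    also have "\<dots> = x2" by (simp add: sdiff_sdiff)
    finally have xx: "x = x2" .
    show "t1 = t2" using p1 p2 aa xx e1(3) by simp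
  qed
  have sub: "psi ` T2 \<subseteq> A2'"
  proof
    fix q assume "q \<in> psi ` T2"
    then obtain a x M where t: "(a,x,M) \<in> T2" "q = psi (a,x,M)" by auto
    show "q \<in> A2'" using T2_img[OF t(1)] t(2) by (simp add: psi_def A2'_def)
  qed
  have "(\<Sum>(a,x,M)\<in>T2. Br a x M * g (sdiff a (UL a x M))) = (\<Sum>t\<in>T2. (\<lambda>(b,y,N). Br b y N * g b) (psi t))"
  proof (intro sum.cong refl)
    fix t assume t: "t \<in> T2"
    obtain a x M where p: "t = (a,x,M)" by (cases t) auto
    show "(case t of (a,x,M) \<Rightarrow> Br a x M * g (sdiff a (UL a x M))) = (\<lambda>(b,y,N). Br b y N * g b) (psi t)"
      using T2_img[of a x M] t p by (simp add: psi_def)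
  qed
  also have "\<dots> = (\<Sum>q\<in>psi ` T2. (\<lambda>(b,y,N). Br b y N * g b) q)"
    using sum.reindex[OF inj, of "\<lambda>(b,y,N). Br b y N * g b"] by simp
  also have "\<dots> \<le> (\<Sum>q\<in>A2'. (\<lambda>(b,y,N). Br b y N * g b) q)"
  proof (rule sum_mono2[OF finA2' sub])
    fix q assume q: "q \<in> A2' - psi ` T2"
    obtain b y N where p: "q = (b,y,N)" by (cases q) auto
    have "b \<in> Om0" "y \<in> Om2" "N \<in> Match (sdiff b y)" using q p by (auto simp: A2'_def)
    then have "Br b y N \<ge> 0" "g b \<ge> 0" using Br_nn[OF Om0_J Om2_J] gnn by auto
    then show "0 \<le> (\<lambda>(b,y,N). Br b y N * g b) q" using p by simp
  qed
  also have "\<dots> = (\<Sum>b\<in>Om0. \<Sum>y\<in>Om2. \<Sum>N\<in>Match (sdiff b y). Br b y N * g b)"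
    unfolding A2'_def using finOm0 finOm2 finMatch_sd Om0_J Om2_J by (intro sum_triple[symmetric]) auto
  also have "\<dots> = (\<Sum>b\<in>Om0. \<Sum>y\<in>Om2. Fr b * Fr y * g b)"
    using EW1r Om0_J Om2_J by (intro sum.cong refl) (simp add: sum_distrib_right)
  also have "\<dots> = Z2 * (\<Sum>b\<in>Om0. Fr b * g b)"
    unfolding Z2_def sum_distrib_left sum_distrib_right by (intro sum.cong refl) (simp add: mult_ac)
  finally show ?thesis .
qed


lemma Z0_pos: "Z0 > 0"
proof -
  obtain x where x: "x \<in> Om0" using Om0ne by blast
  have "x \<in> Om" using x Om_Un by blast
  then show ?thesis unfolding Z0_def using x finOm0 Fr_pos Om_Un
    by (intro sum_pos2[of _ x]) (auto simp: less_imp_le)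
qed

lemma Z2_nn: "Z2 \<ge> 0" unfolding Z2_def using Fr_pos Om_Un by (intro sum_nonneg) (auto simp: less_imp_le)

lemma Z_split: "Z = Z0 + Z2"
  unfolding Z_def Z0_def Z2_def Om_Un using finOm0 finOm2 Om_disj by (simp add: sum.union_disjoint)

lemma Qf_nn: "Qf h \<ge> 0"
  unfolding Qf_def using min_nn by (intro sum_nonneg) auto

lemma PC_F:
  fixes h :: "'a set \<Rightarrow> real"
  defines "c \<equiv> (\<Sum>x\<in>Om0. Fr x * h x) / Z0"
  shows "(\<Sum>a\<in>Om. Fr a * (h a - c)^2) \<le> real n * Z^2 * Qf h / Z0^2"
proof -
  define S0 where "S0 = (\<Sum>a\<in>Om0. Fr a * (h a - c)^2)"
  define S2 where "S2 = (\<Sum>a\<in>Om2. Fr a * (h a - c)^2)"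
  define K where "K = real n * Z * Qf h"
  have Z0p: "Z0 > 0" by (rule Z0_pos)
  have Kn: "K \<ge> 0" unfolding K_def using Qf_nn Z_split Z0p Z2_nn by simp
  define u where "u = (\<lambda>x. h x - c)"
  have su: "(\<Sum>x\<in>Om0. Fr x * u x) = 0"
  proof -
    have "(\<Sum>x\<in>Om0. Fr x * u x) = (\<Sum>x\<in>Om0. Fr x * h x) - c * Z0"
      unfolding u_def Z0_def by (simp add: right_diff_distrib sum_subtractf sum_distrib_left mult.commute)
    then show ?thesis using Z0p unfolding c_def by simp
  qed
  have iden: "(\<Sum>x\<in>Om0. \<Sum>y\<in>Om0. Fr x * Fr y * (h x - h y)^2) = 2 * Z0 * S0"
  proof -
    have "(\<Sum>x\<in>Om0. \<Sum>y\<in>Om0. Fr x * Fr y * (h x - h y)^2) = (\<Sum>x\<in>Om0. \<Sum>y\<in>Om0. Fr x * Fr y * (u x - u y)^2)"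
      unfolding u_def by simp
    also have "\<dots> = 2 * Z0 * S0" using dsum_id[of Fr u Om0] su unfolding Z0_def S0_def u_def by simp
    finally show ?thesis .
  qed
  have r0: "2 * Z0 * S0 \<le> K / 2" using R0_bound[of h] iden unfolding K_def by simp
  have S0n: "S0 \<ge> 0" unfolding S0_def using Fr_pos Om_Un by (intro sum_nonneg) (auto simp: less_imp_le)
  have s2: "Z0 * S2 \<le> 3/2 * (K / 2) + 3 * (Z2 * S0)"
  proof -
    have "Z0 * S2 = (\<Sum>(a,x,M)\<in>T2. Br a x M * (h a - c)^2)" unfolding S2_def by (rule S2_eq)
    also have "\<dots> \<le> (\<Sum>(a,x,M)\<in>T2. 3/2 * (Br a x M * (h a - h (sdiff a (UL a x M)))^2) + 3 * (Br a x M * (h (sdiff a (UL a x M)) - c)^2))"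
    proof (rule sum_mono)
      fix t assume t: "t \<in> T2"
      obtain a x M where p: "t = (a,x,M)" by (cases t) auto
      have B: "Br a x M \<ge> 0" using T2_mem[of t] t p by simp
      have "(h a - c)^2 \<le> 3/2 * (h a - h (sdiff a (UL a x M)))^2 + 3 * (h (sdiff a (UL a x M)) - c)^2"
        using ineq32[of "h a - h (sdiff a (UL a x M))" "h (sdiff a (UL a x M)) - c"] by simp
      then have "Br a x M * (h a - c)^2 \<le> Br a x M * (3/2 * (h a - h (sdiff a (UL a x M)))^2 + 3 * (h (sdiff a (UL a x M)) - c)^2)"
        using B by (rule mult_left_mono)
      then show "(case t of (a,x,M) \<Rightarrow> Br a x M * (h a - c)^2) \<le> (case t of (a,x,M) \<Rightarrow> 3/2 * (Br a x M * (h a - h (sdiff a (UL a x M)))^2) + 3 * (Br a x M * (h (sdiff a (UL a x M)) - c)^2))"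
        using p by (simp add: algebra_simps)
    qed
    also have "\<dots> = 3/2 * (\<Sum>(a,x,M)\<in>T2. Br a x M * (h a - h (sdiff a (UL a x M)))^2) + 3 * (\<Sum>(a,x,M)\<in>T2. Br a x M * (h (sdiff a (UL a x M)) - c)^2)"
      by (simp add: sum.distrib sum_distrib_left case_prod_beta)
    also have "\<dots> \<le> 3/2 * (K / 2) + 3 * (Z2 * S0)"
    proof (rule add_mono)
      show "3/2 * (\<Sum>(a,x,M)\<in>T2. Br a x M * (h a - h (sdiff a (UL a x M)))^2) \<le> 3/2 * (K/2)"
        using R2_bound[of h] unfolding K_def by simp
      show "3 * (\<Sum>(a,x,M)\<in>T2. Br a x M * (h (sdiff a (UL a x M)) - c)^2) \<le> 3 * (Z2 * S0)"
        using W_bound[of "\<lambda>b. (h b - c)^2"] unfolding S0_def by simp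
    qed
    finally show ?thesis .
  qed
  have tot: "(\<Sum>a\<in>Om. Fr a * (h a - c)^2) = S0 + S2"
    unfolding S0_def S2_def Om_Un using finOm0 finOm2 Om_disj by (simp add: sum.union_disjoint)
  have Z2n: "Z2 \<ge> 0" by (rule Z2_nn)
  have a1: "Z0 * (Z0 * S0) \<le> Z0 * (K/4)" using r0 Z0p by (intro mult_left_mono) auto
  have a2: "Z0 * (Z0 * S2) \<le> Z0 * (3/2 * (K / 2) + 3 * (Z2 * S0))" using s2 Z0p by (intro mult_left_mono) auto
  have a3: "Z2 * (Z0 * S0) \<le> Z2 * (K/4)" using r0 Z2n by (intro mult_left_mono) auto
  have "Z0^2 * (S0 + S2) \<le> K * (Z0 + Z2)"
  proof -
    have "Z0^2 * (S0 + S2) = Z0 * (Z0 * S0) + Z0 * (Z0 * S2)" by (simp add: power2_eq_square algebra_simps)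
    also have "\<dots> \<le> Z0 * (K/4) + Z0 * (3/2 * (K / 2) + 3 * (Z2 * S0))" using a1 a2 by linarith
    also have "\<dots> = Z0 * K + 3 * (Z2 * (Z0 * S0))" by (simp add: algebra_simps)
    also have "\<dots> \<le> Z0 * K + 3 * (Z2 * (K/4))" using a3 by linarith
    also have "\<dots> \<le> K * (Z0 + Z2)" using Kn Z2n by (simp add: algebra_simps)
    finally show ?thesis .
  qed
  then have "Z0^2 * (S0 + S2) \<le> real n * Z^2 * Qf h" unfolding K_def using Z_split by (simp add: power2_eq_square algebra_simps)
  then have "S0 + S2 \<le> real n * Z^2 * Qf h / Z0^2" using Z0p by (simp add: field_simps)
  then show ?thesis using tot by simp
qed

end

context chain begin

abbreviation "P \<equiv> Pmat J E F"
abbreviation "pid \<equiv> pi_dist J E F"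

definition "nbr x = {y'\<in>Om. hdist x y' = 2}"
definition "mr x y = min 1 (Fr y / Fr x)"

lemma hdist_refl: "hdist x x = 0" by (simp add: hdist_def sdiff_def)
lemma hdist_sym: "hdist x y = hdist y x" by (simp add: hdist_def sdiff_comm)

lemma P_off: "hdist x y = 2 \<Longrightarrow> P x y = 2 / real n^2 * mr x y"
  by (simp add: Pmat_def Let_def mr_def Fr_def)
lemma P_diag: "P x x = 1 - 2 / real n^2 * (\<Sum>y\<in>nbr x. mr x y)"
  by (simp add: Pmat_def Let_def mr_def Fr_def nbr_def hdist_refl)
lemma P_zero: "hdist x y \<noteq> 2 \<Longrightarrow> x \<noteq> y \<Longrightarrow> P x y = 0"
  by (simp add: Pmat_def Let_def)

lemma pid_eq: "pid x = Fr x / Z" by (simp add: pi_dist_def Fr_def Z_def)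

lemma Zpos: "Z > 0" using Z0_pos Z2_nn Z_split by simp

lemma n_pos: "real n \<ge> 2" using n2 by simp

lemma fin_nbr: "finite (nbr x)" using finOm by (simp add: nbr_def)

lemma mr_bounds: "x \<in> Om \<Longrightarrow> y \<in> Om \<Longrightarrow> 0 \<le> mr x y \<and> mr x y \<le> 1"
  using Fr_pos[of x] Fr_pos[of y] by (simp add: mr_def)

lemma Fr_mr: assumes "x \<in> Om" shows "Fr x * mr x y = min (Fr x) (Fr y)"
proof -
  have p: "Fr x > 0" using Fr_pos[OF assms] .
  show ?thesis
  proof (cases "Fr y \<le> Fr x")
    case True
    then have "Fr y / Fr x \<le> 1" using p by simp
    then show ?thesis using True p by (simp add: mr_def min_def)
  next
    case False
    then have "\<not> Fr y / Fr x \<le> 1" using p by simp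
    then show ?thesis using False p by (simp add: mr_def min_def)
  qed
qed

lemma card_nbr: assumes xO: "x \<in> Om" shows "card (nbr x) \<le> n choose 2"
proof -
  have xJ: "x \<subseteq> J" using Om_J[OF xO] .
  have inj: "inj_on (sdiff x) (nbr x)"
  proof (rule inj_onI)
    fix a b assume "sdiff x a = sdiff x b"
    then have "sdiff x (sdiff x a) = sdiff x (sdiff x b)" by simp
    then show "a = b" by (simp add: sdiff_sdiff2)
  qed
  have sub: "sdiff x ` nbr x \<subseteq> {B. B \<subseteq> J \<and> card B = 2}"
  proof
    fix S assume "S \<in> sdiff x ` nbr x"
    then obtain y where y: "y \<in> nbr x" "S = sdiff x y" by auto
    have "y \<in> Om" "hdist x y = 2" using y by (auto simp: nbr_def)
    then have "y \<subseteq> J" "card S = 2" using Om_J y(2) by (auto simp: hdist_def)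
    moreover have "S \<subseteq> J" using sdiff_sub[of x J y] xJ calculation(1) y(2) by simp
    ultimately show "S \<in> {B. B \<subseteq> J \<and> card B = 2}" by simp
  qed
  have fin: "finite {B. B \<subseteq> J \<and> card B = 2}" using finJ by simp
  have "card (nbr x) = card (sdiff x ` nbr x)" using card_image[OF inj] by simp
  also have "\<dots> \<le> card {B. B \<subseteq> J \<and> card B = 2}" using card_mono[OF fin sub] .
  also have "\<dots> = n choose 2" using n_subsets[OF finJ] .
  finally show ?thesis .
qed

lemma P_diag_ge: assumes xO: "x \<in> Om" shows "P x x \<ge> 1 / real n"
proof -
  have "(\<Sum>y\<in>nbr x. mr x y) \<le> real (card (nbr x)) * 1"
    using mr_bounds[OF xO] by (intro sum_bounded_above) (auto simp: nbr_def)
  also have "\<dots> \<le> real (n choose 2)" using card_nbr[OF xO] by simp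
  finally have s: "(\<Sum>y\<in>nbr x. mr x y) \<le> real (n choose 2)" .
  have c2: "2 * (n choose 2) \<le> n * (n - 1)"
    using div_times_less_eq_dividend[of "n*(n-1)" 2] by (simp add: choose_two mult.commute)
  then have "real (2 * (n choose 2)) \<le> real (n * (n - 1))" by (simp only: of_nat_le_iff)
  then have c2r: "2 * real (n choose 2) \<le> real n * (real n - 1)" using n2 by (simp add: of_nat_diff)
  have np: "real n > 0" using n_pos by simp
  have "2 / real n^2 * (\<Sum>y\<in>nbr x. mr x y) \<le> 2 / real n^2 * real (n choose 2)"
    using s by (intro mult_left_mono) auto
  also have "\<dots> = (2 * real (n choose 2)) / real n / real n" by (simp add: power2_eq_square)
  also have "\<dots> \<le> (real n * (real n - 1)) / real n / real n"
    using c2r np by (intro divide_right_mono) auto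
  also have "\<dots> = (real n - 1) / real n" using np by simp
  finally have "2 / real n^2 * (\<Sum>y\<in>nbr x. mr x y) \<le> (real n - 1) / real n" .
  moreover have "1 - (real n - 1) / real n = 1 / real n" using np by (simp add: field_simps)
  ultimately show ?thesis unfolding P_diag by linarith
qed

lemma P_nn: "x \<in> Om \<Longrightarrow> y \<in> Om \<Longrightarrow> P x y \<ge> 0"
proof -
  assume xy: "x \<in> Om" "y \<in> Om"
  show "P x y \<ge> 0"
  proof (cases "hdist x y = 2")
    case True then show ?thesis using P_off mr_bounds[OF xy] by simp
  next
    case False
    show ?thesis
    proof (cases "x = y")
      case True
      have "1 / real n > 0" using n_pos by simp
      moreover have "P x y = P x x" using True by simp
      ultimately show ?thesis using P_diag_ge[OF xy(1)] by linarith
    qed (simp add: P_zero False)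
  qed
qed

lemma row_sum: assumes xO: "x \<in> Om" shows "(\<Sum>y\<in>Om. P x y) = 1"
proof -
  have "(\<Sum>y\<in>Om. P x y) = P x x + (\<Sum>y\<in>Om - {x}. P x y)"
    using finOm xO by (simp add: sum.remove)
  also have "(\<Sum>y\<in>Om - {x}. P x y) = (\<Sum>y\<in>nbr x. P x y)"
  proof (rule sum.mono_neutral_right)
    show "finite (Om - {x})" using finOm by simp
    show "nbr x \<subseteq> Om - {x}" by (auto simp: nbr_def hdist_refl)
    show "\<forall>i\<in>Om - {x} - nbr x. P x i = 0" by (auto simp: nbr_def intro: P_zero)
  qed
  also have "\<dots> = (\<Sum>y\<in>nbr x. 2 / real n^2 * mr x y)" by (intro sum.cong refl) (simp add: nbr_def P_off)
  also have "\<dots> = 2 / real n^2 * (\<Sum>y\<in>nbr x. mr x y)" by (simp add: sum_distrib_left)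
  finally show ?thesis unfolding P_diag by simp
qed

lemma pP: assumes "x \<in> Om" "y \<in> Om" "x \<noteq> y"
  shows "pid x * P x y = (if hdist x y = 2 then 2 / (real n^2 * Z) * min (Fr x) (Fr y) else 0)"
proof (cases "hdist x y = 2")
  case True
  have "pid x * P x y = 2 / (real n^2 * Z) * (Fr x * mr x y)" using True by (simp add: pid_eq P_off mult_ac)
  then show ?thesis using True Fr_mr[OF assms(1)] by simp
next
  case False then show ?thesis using assms(3) by (simp add: P_zero)
qed

lemma detailed_balance: assumes "x \<in> Om" "y \<in> Om" shows "pid x * P x y = pid y * P y x"
proof (cases "x = y")
  case True then show ?thesis by simp
next
  case False
  then show ?thesis using pP[OF assms False] pP[OF assms(2,1)] False hdist_sym[of x y] by (simp add: min.commute)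
qed

lemma stationary: assumes yO: "y \<in> Om" shows "(\<Sum>x\<in>Om. pid x * P x y) = pid y"
proof -
  have "(\<Sum>x\<in>Om. pid x * P x y) = (\<Sum>x\<in>Om. pid y * P y x)"
    using detailed_balance yO by (intro sum.cong refl) auto
  also have "\<dots> = pid y" using row_sum[OF yO] by (simp add: sum_distrib_left[symmetric])
  finally show ?thesis .
qed

lemma pid_pos: "x \<in> Om \<Longrightarrow> pid x > 0" using Fr_pos Zpos by (simp add: pid_eq)
lemma pid_sum: "(\<Sum>x\<in>Om. pid x) = 1" using Zpos by (simp add: pid_eq sum_divide_distrib[symmetric] Z_def)

definition "Ed h = 1/2 * (\<Sum>y\<in>Om. \<Sum>z\<in>Om. pid y * P y z * (h y - h z)^2)"

lemma Ed_Q: "Ed h = Qf h / (real n^2 * Z)"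
proof -
  have "(\<Sum>y\<in>Om. \<Sum>z\<in>Om. pid y * P y z * (h y - h z)^2) =
        (\<Sum>y\<in>Om. \<Sum>z\<in>Om. 2 / (real n^2 * Z) * (if hdist y z = 2 then min (Fr y) (Fr z) * (h y - h z)^2 else 0))"
  proof (intro sum.cong refl)
    fix y z assume yz: "y \<in> Om" "z \<in> Om"
    show "pid y * P y z * (h y - h z)^2 = 2 / (real n^2 * Z) * (if hdist y z = 2 then min (Fr y) (Fr z) * (h y - h z)^2 else 0)"
    proof (cases "y = z")
      case True then show ?thesis by (simp add: hdist_refl)
    next
      case False then show ?thesis using pP[OF yz False] by simp
    qed
  qed
  also have "\<dots> = 2 / (real n^2 * Z) * Qf h" unfolding Qf_def by (simp add: sum_distrib_left)
  finally show ?thesis unfolding Ed_def by simp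
qed

end

context chain begin

lemma double_ge: assumes yO: "y \<in> Om"
  shows "(\<Sum>z\<in>Om. \<Sum>z'\<in>Om. P y z * P y z' * (h z - h z')^2) \<ge> 2 / real n * (\<Sum>z\<in>Om. P y z * (h y - h z)^2)"
proof -
  define f where "f = (\<lambda>z z'. P y z * P y z' * (h z - h z')^2)"
  have fnn: "f z z' \<ge> 0" if "z \<in> Om" "z' \<in> Om" for z z' using P_nn yO that by (simp add: f_def)
  have al: "P y y \<ge> 1 / real n" using P_diag_ge[OF yO] .
  have A: "(\<Sum>z\<in>Om. \<Sum>z'\<in>Om. f z z') = (\<Sum>z'\<in>Om. f y z') + (\<Sum>z\<in>Om - {y}. \<Sum>z'\<in>Om. f z z')"
    by (rule sum.remove[OF finOm yO])
  have B: "(\<Sum>z\<in>Om - {y}. \<Sum>z'\<in>Om. f z z') \<ge> (\<Sum>z\<in>Om - {y}. f z y)"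
  proof (rule sum_mono)
    fix z assume z: "z \<in> Om - {y}"
    show "f z y \<le> (\<Sum>z'\<in>Om. f z z')" using finOm yO fnn z by (intro member_le_sum) auto
  qed
  have C: "(\<Sum>z\<in>Om - {y}. f z y) = (\<Sum>z\<in>Om. f z y)"
  proof -
    have "(\<Sum>z\<in>Om. f z y) = f y y + (\<Sum>z\<in>Om - {y}. f z y)" by (rule sum.remove[OF finOm yO])
    moreover have "f y y = 0" by (simp add: f_def)
    ultimately show ?thesis by simp
  qed
  have D: "(\<Sum>z'\<in>Om. f y z') \<ge> (\<Sum>z\<in>Om. 1 / real n * (P y z * (h y - h z)^2))"
  proof (rule sum_mono)
    fix z assume z: "z \<in> Om"
    have "0 \<le> P y z * (h y - h z)^2" using P_nn[OF yO z] by simp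
    then have "1 / real n * (P y z * (h y - h z)^2) \<le> P y y * (P y z * (h y - h z)^2)"
      using mult_right_mono[OF al] by blast
    then show "1 / real n * (P y z * (h y - h z)^2) \<le> f y z" by (simp add: f_def mult_ac)
  qed
  have E: "(\<Sum>z\<in>Om. f z y) \<ge> (\<Sum>z\<in>Om. 1 / real n * (P y z * (h y - h z)^2))"
  proof (rule sum_mono)
    fix z assume z: "z \<in> Om"
    have "0 \<le> P y z * (h y - h z)^2" using P_nn[OF yO z] by simp
    then have "1 / real n * (P y z * (h y - h z)^2) \<le> P y y * (P y z * (h y - h z)^2)"
      using mult_right_mono[OF al] by blast
    moreover have "(h z - h y)^2 = (h y - h z)^2" by (simp add: power2_commute)
    ultimately show "1 / real n * (P y z * (h y - h z)^2) \<le> f z y" by (simp add: f_def mult_ac)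
  qed
  have "(\<Sum>z\<in>Om. 1 / real n * (P y z * (h y - h z)^2)) = 1 / real n * (\<Sum>z\<in>Om. P y z * (h y - h z)^2)"
    by (simp add: sum_distrib_left)
  then show ?thesis using A B C D E unfolding f_def by (simp add: field_simps)
qed

lemma pt_bound: assumes yO: "y \<in> Om"
  shows "(\<Sum>z\<in>Om. P y z * h z)^2 \<le> (\<Sum>z\<in>Om. P y z * (h z)^2) - 1 / real n * (\<Sum>z\<in>Om. P y z * (h y - h z)^2)"
proof -
  have id: "(\<Sum>z\<in>Om. \<Sum>z'\<in>Om. P y z * P y z' * (h z - h z')^2)
     = 2 * (\<Sum>z\<in>Om. P y z) * (\<Sum>z\<in>Om. P y z * (h z)^2) - 2 * (\<Sum>z\<in>Om. P y z * h z) * (\<Sum>z\<in>Om. P y z * h z)"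
    by (rule dsum_id)
  have "2 / real n * (\<Sum>z\<in>Om. P y z * (h y - h z)^2) \<le> 2 * (\<Sum>z\<in>Om. P y z * (h z)^2) - 2 * (\<Sum>z\<in>Om. P y z * h z)^2"
    using double_ge[OF yO, of h] id row_sum[OF yO] by (simp add: power2_eq_square)
  then show ?thesis by (simp add: field_simps)
qed

lemma contraction:
  "(\<Sum>y\<in>Om. pid y * (\<Sum>z\<in>Om. P y z * h z)^2) \<le> (\<Sum>y\<in>Om. pid y * (h y)^2) - 2 / real n * Ed h"
proof -
  have "(\<Sum>y\<in>Om. pid y * (\<Sum>z\<in>Om. P y z * h z)^2) \<le>
        (\<Sum>y\<in>Om. pid y * ((\<Sum>z\<in>Om. P y z * (h z)^2) - 1 / real n * (\<Sum>z\<in>Om. P y z * (h y - h z)^2)))"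
    using pt_bound pid_pos by (intro sum_mono mult_left_mono) (auto simp: less_imp_le)
  also have "\<dots> = (\<Sum>y\<in>Om. \<Sum>z\<in>Om. pid y * P y z * (h z)^2) - 1 / real n * (\<Sum>y\<in>Om. \<Sum>z\<in>Om. pid y * P y z * (h y - h z)^2)"
    by (simp add: sum_subtractf sum_distrib_left right_diff_distrib mult_ac)
  also have "(\<Sum>y\<in>Om. \<Sum>z\<in>Om. pid y * P y z * (h z)^2) = (\<Sum>z\<in>Om. pid z * (h z)^2)"
  proof -
    have "(\<Sum>y\<in>Om. \<Sum>z\<in>Om. pid y * P y z * (h z)^2) = (\<Sum>z\<in>Om. \<Sum>y\<in>Om. pid y * P y z * (h z)^2)"
      by (rule sum.swap)
    also have "\<dots> = (\<Sum>z\<in>Om. (\<Sum>y\<in>Om. pid y * P y z) * (h z)^2)" by (simp add: sum_distrib_right)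
    also have "\<dots> = (\<Sum>z\<in>Om. pid z * (h z)^2)" using stationary by simp
    finally show ?thesis .
  qed
  also have "1 / real n * (\<Sum>y\<in>Om. \<Sum>z\<in>Om. pid y * P y z * (h y - h z)^2) = 2 / real n * Ed h"
    by (simp add: Ed_def)
  finally show ?thesis .
qed

lemma PC_pi:
  assumes m0: "(\<Sum>y\<in>Om. pid y * h y) = 0"
  shows "(\<Sum>y\<in>Om. pid y * (h y)^2) \<le> real n ^ 3 * Z^2 / Z0^2 * Ed h"
proof -
  define c where "c = (\<Sum>x\<in>Om0. Fr x * h x) / Z0"
  have Zp: "Z > 0" by (rule Zpos)
  have Z0p: "Z0 > 0" by (rule Z0_pos)
  have "(\<Sum>y\<in>Om. pid y * (h y - c)^2) = (\<Sum>y\<in>Om. pid y * (h y)^2) - 2 * c * (\<Sum>y\<in>Om. pid y * h y) + c^2 * (\<Sum>y\<in>Om. pid y)"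
    by (simp add: power2_diff sum.distrib sum_subtractf sum_distrib_left algebra_simps)
  also have "\<dots> = (\<Sum>y\<in>Om. pid y * (h y)^2) + c^2" using m0 pid_sum by simp
  finally have v: "(\<Sum>y\<in>Om. pid y * (h y)^2) \<le> (\<Sum>y\<in>Om. pid y * (h y - c)^2)" by simp
  have "(\<Sum>y\<in>Om. pid y * (h y - c)^2) = (\<Sum>y\<in>Om. Fr y * (h y - c)^2) / Z"
    by (simp add: pid_eq sum_divide_distrib)
  also have "\<dots> \<le> (real n * Z^2 * Qf h / Z0^2) / Z"
    using PC_F[of h] Zp unfolding c_def by (intro divide_right_mono) auto
  also have "\<dots> = real n ^ 3 * Z^2 / Z0^2 * Ed h"
    using Zp Z0p n_pos unfolding Ed_Q by (simp add: field_simps power2_eq_square power3_eq_cube)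
  finally show ?thesis using v by simp
qed

end

context chain begin

lemma Ppow_sum: assumes x0: "x0 \<in> Om" shows "(\<Sum>y\<in>Om. Ppow J E F t x0 y) = 1"
proof (induction t)
  case 0 then show ?case using x0 finOm by simp
next
  case (Suc t)
  have "(\<Sum>y\<in>Om. Ppow J E F (Suc t) x0 y) = (\<Sum>y\<in>Om. \<Sum>z\<in>Om. Ppow J E F t x0 z * P z y)" by simp
  also have "\<dots> = (\<Sum>z\<in>Om. \<Sum>y\<in>Om. Ppow J E F t x0 z * P z y)" by (rule sum.swap)
  also have "\<dots> = (\<Sum>z\<in>Om. Ppow J E F t x0 z * (\<Sum>y\<in>Om. P z y))" by (simp add: sum_distrib_left)
  also have "\<dots> = (\<Sum>z\<in>Om. Ppow J E F t x0 z)" using row_sum by simp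
  finally show ?case using Suc by simp
qed

lemma main_bound:
  assumes x0: "x0 \<in> Om"
  shows "(\<Sum>y\<in>Om. \<bar>Ppow J E F t x0 y - pid y\<bar>) \<le> pid x0 powr (-1/2) * exp (- real t * (Z0/Z)^2 / real n^4)"
proof -
  define p where "p = pid x0"
  define gam where "gam = (Z0/Z)^2 / real n^4"
  define r where "r = 1 - 2 * gam"
  define g where "g = (\<lambda>t y. Ppow J E F t x0 y / pid y)"
  define V where "V = (\<lambda>t. \<Sum>y\<in>Om. pid y * (g t y - 1)^2)"
  have pp: "p > 0" using pid_pos[OF x0] p_def by simp
  have Zp: "Z > 0" by (rule Zpos)
  have Z0p: "Z0 > 0" by (rule Z0_pos)
  have np: "real n \<ge> 2" by (rule n_pos)
  have pidp: "\<And>y. y \<in> Om \<Longrightarrow> pid y > 0" using pid_pos by blast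
  have sg: "(\<Sum>y\<in>Om. pid y * g t y) = 1" for t
  proof -
    have "(\<Sum>y\<in>Om. pid y * g t y) = (\<Sum>y\<in>Om. Ppow J E F t x0 y)"
    proof (intro sum.cong refl)
      fix y assume "y \<in> Om"
      then have "pid y > 0" by (rule pidp)
      then show "pid y * g t y = Ppow J E F t x0 y" by (simp add: g_def)
    qed
    then show ?thesis using Ppow_sum[OF x0] by simp
  qed
  have gstep: "g (Suc t) y = (\<Sum>z\<in>Om. P y z * g t z)" if y: "y \<in> Om" for t y
  proof -
    have "g (Suc t) y = (\<Sum>z\<in>Om. Ppow J E F t x0 z * P z y / pid y)"
      by (simp add: g_def sum_divide_distrib)
    also have "\<dots> = (\<Sum>z\<in>Om. P y z * g t z)"
    proof (intro sum.cong refl)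
      fix z assume z: "z \<in> Om"
      have db: "pid z * P z y = pid y * P y z" using detailed_balance[OF z y] .
      have "P z y / pid y = P y z / pid z" using db pidp[OF y] pidp[OF z] by (simp add: field_simps)
      then show "Ppow J E F t x0 z * P z y / pid y = P y z * g t z"
        by (simp add: g_def) (metis times_divide_eq_right mult.commute)
    qed
    finally show ?thesis .
  qed
  have gam_nn: "gam \<ge> 0" unfolding gam_def by simp
  have gam_le: "gam \<le> 1/2"
  proof -
    have "Z0 \<le> Z" using Z_split Z2_nn by simp
    then have "Z0 / Z \<le> 1" using Zp by simp
    then have a: "(Z0/Z)^2 \<le> 1" using Z0p Zp by (simp add: power_le_one)
    have b: "real n ^ 4 \<ge> 2 ^ 4" using power_mono[OF np, of 4] by simp
    have bp: "real n ^ 4 > 0" using np by simp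
    have "gam \<le> 1 / real n ^ 4" unfolding gam_def using a bp by (intro divide_right_mono) auto
    also have "\<dots> \<le> 1 / 2 ^ 4" using b bp by (intro divide_left_mono) auto
    finally show ?thesis by simp
  qed
  have r_nn: "r \<ge> 0" using gam_le r_def by simp
  have Vstep: "V (Suc t) \<le> r * V t" for t
  proof -
    define h where "h = (\<lambda>y. g t y - 1)"
    have Ph: "(\<Sum>z\<in>Om. P y z * h z) = g (Suc t) y - 1" if y: "y \<in> Om" for y
    proof -
      have "(\<Sum>z\<in>Om. P y z * h z) = (\<Sum>z\<in>Om. P y z * g t z) - (\<Sum>z\<in>Om. P y z)"
        by (simp add: h_def right_diff_distrib sum_subtractf)
      then show ?thesis using gstep[OF y] row_sum[OF y] by simp
    qed
    have m0: "(\<Sum>y\<in>Om. pid y * h y) = 0"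
      using sg[of t] pid_sum by (simp add: h_def right_diff_distrib sum_subtractf)
    have "V (Suc t) = (\<Sum>y\<in>Om. pid y * (\<Sum>z\<in>Om. P y z * h z)^2)"
      unfolding V_def using Ph by (intro sum.cong refl) simp
    also have "\<dots> \<le> (\<Sum>y\<in>Om. pid y * (h y)^2) - 2 / real n * Ed h" by (rule contraction)
    finally have v1: "V (Suc t) \<le> V t - 2 / real n * Ed h" unfolding V_def h_def by simp
    have v2: "V t \<le> real n ^ 3 * Z^2 / Z0^2 * Ed h" using PC_pi[OF m0] unfolding V_def h_def by simp
    define C where "C = real n ^ 3 * Z^2 / Z0^2"
    have cp: "C > 0" unfolding C_def using Zp Z0p np by simp
    have v2': "V t \<le> Ed h * C" using v2 unfolding C_def by (simp add: mult.commute)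
    have "Ed h \<ge> V t / C" using v2' cp by (simp add: pos_divide_le_eq)
    then have "2 / real n * Ed h \<ge> 2 / real n * (V t / C)"
      using np by (intro mult_left_mono) auto
    moreover have "2 / real n * (V t / C) = 2 * gam * V t"
      unfolding gam_def C_def using Zp Z0p np by (simp add: field_simps power2_eq_square power3_eq_cube power4_eq_xxxx)
    ultimately have "2 / real n * Ed h \<ge> 2 * gam * V t" by simp
    then show ?thesis using v1 unfolding r_def by (simp add: algebra_simps)
  qed
  have V0: "V 0 \<le> 1 / p"
  proof -
    have "V 0 = (\<Sum>y\<in>Om. pid y * (g 0 y)^2) - 2 * (\<Sum>y\<in>Om. pid y * g 0 y) + (\<Sum>y\<in>Om. pid y)"
      unfolding V_def by (simp add: power2_diff sum.distrib sum_subtractf sum_distrib_left algebra_simps)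
    also have "(\<Sum>y\<in>Om. pid y * (g 0 y)^2) = (\<Sum>y\<in>Om. if x0 = y then 1 / p else 0)"
      using pidp by (intro sum.cong refl) (auto simp: g_def p_def power2_eq_square)
    also have "\<dots> = 1 / p" using x0 finOm by simp
    finally show ?thesis using sg[of 0] pid_sum by simp
  qed
  have Vt: "V t \<le> r ^ t / p" for t
  proof (induction t)
    case 0 then show ?case using V0 by simp
  next
    case (Suc t)
    have "V (Suc t) \<le> r * V t" by (rule Vstep)
    also have "\<dots> \<le> r * (r ^ t / p)" using Suc r_nn by (intro mult_left_mono) auto
    finally show ?case by simp
  qed
  define S where "S = (\<Sum>y\<in>Om. \<bar>Ppow J E F t x0 y - pid y\<bar>)"
  have S_eq: "S = (\<Sum>y\<in>Om. pid y * \<bar>g t y - 1\<bar>)"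
    unfolding S_def
  proof (intro sum.cong refl)
    fix y assume y: "y \<in> Om"
    have "Ppow J E F t x0 y - pid y = pid y * (g t y - 1)" using pidp[OF y] by (simp add: g_def field_simps)
    then show "\<bar>Ppow J E F t x0 y - pid y\<bar> = pid y * \<bar>g t y - 1\<bar>" using pidp[OF y] by (simp add: abs_mult)
  qed
  have "S^2 \<le> (\<Sum>y\<in>Om. pid y) * (\<Sum>y\<in>Om. pid y * \<bar>g t y - 1\<bar>^2)"
    unfolding S_eq using finOm pidp by (intro wcs) (auto simp: less_imp_le)
  also have "\<dots> = V t" using pid_sum by (simp add: V_def)
  also have "\<dots> \<le> r ^ t / p" by (rule Vt)
  also have "r ^ t \<le> exp (- 2 * gam) ^ t"
  proof (rule power_mono)
    show "r \<le> exp (- 2 * gam)" using exp_ge_add_one_self[of "- 2 * gam"] r_def by simp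
  qed (rule r_nn)
  finally have S2: "S^2 \<le> exp (- 2 * gam) ^ t / p" using pp by (simp add: divide_right_mono)
  have Snn: "S \<ge> 0" unfolding S_def by (intro sum_nonneg) simp
  have e: "exp (- 2 * gam) ^ t = (exp (- gam * real t))^2"
    by (simp add: exp_of_nat_mult[symmetric] power2_eq_square exp_add[symmetric] mult_ac)
  have "S = sqrt (S^2)" using Snn by simp
  also have "\<dots> \<le> sqrt ((exp (- gam * real t))^2 / p)"
  proof (rule real_sqrt_le_mono)
    show "S^2 \<le> (exp (- gam * real t))^2 / p" using S2 e by simp
  qed
  also have "\<dots> = exp (- gam * real t) / sqrt p" by (simp add: real_sqrt_divide)
  also have "\<dots> = p powr (-1/2) * exp (- real t * (Z0/Z)^2 / real n^4)"
  proof -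
    have "p powr (-1/2) = 1 / sqrt p" using pp by (simp add: powr_minus_divide powr_half_sqrt)
    moreover have "- gam * real t = - real t * (Z0/Z)^2 / real n^4" by (simp add: gam_def)
    ultimately show ?thesis by simp
  qed
  finally show ?thesis unfolding S_def p_def .
qed

end

theorem theorem5:
  fixes J :: "'a set" and E :: "'a set set" and F :: "'a set \<Rightarrow> rat"
  assumes "finite J" and "card J \<ge> 2"
    and "pair_partition J E"
    and "\<forall>x. x \<subseteq> J \<longrightarrow> F x \<ge> 0"
    and "even_windable J F"
    and "Omega_k J E F 0 \<noteq> {}"
  shows "\<forall>x\<in>Omega J E F. \<forall>t::nat.
    (1/2) * (\<Sum>y\<in>Omega J E F. \<bar>Ppow J E F t x y - pi_dist J E F y\<bar>)
      \<le> (1/2) * (pi_dist J E F x) powr (-1/2)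
          * exp (- real t * (\<Sum>z\<in>Omega_k J E F 0. pi_dist J E F z)^2 / real (card J)^4)"
proof -
  obtain B :: "'a set \<Rightarrow> 'a set \<Rightarrow> 'a set set \<Rightarrow> rat" where
    B1: "\<forall>x y M. x \<subseteq> J \<longrightarrow> y \<subseteq> J \<longrightarrow> M \<in> Match (sdiff x y) \<longrightarrow> B x y M \<ge> 0" and
    B2: "\<forall>x y. x \<subseteq> J \<longrightarrow> y \<subseteq> J \<longrightarrow> F x * F y = (\<Sum>M\<in>Match (sdiff x y). B x y M)" and
    B3: "\<forall>x y M S. x \<subseteq> J \<longrightarrow> y \<subseteq> J \<longrightarrow> M \<in> Match (sdiff x y) \<longrightarrow> S \<in> M \<longrightarrow>
            B x y M = B (sdiff x S) (sdiff y S) M"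
    using assms(5) unfolding even_windable_def by (elim exE conjE) (rule that)
  interpret chain J E F B
  proof (unfold_locales)
    show "finite J" by (rule assms(1))
    show "pair_partition J E" by (rule assms(3))
    show "card J \<ge> 2" by (rule assms(2))
    show "\<And>x. x \<subseteq> J \<Longrightarrow> F x \<ge> 0" using assms(4) by simp
    show "\<And>x y M. x\<subseteq>J \<Longrightarrow> y\<subseteq>J \<Longrightarrow> M \<in> Match (sdiff x y) \<Longrightarrow> B x y M \<ge> 0" using B1 by simp
    show "\<And>x y. x\<subseteq>J \<Longrightarrow> y\<subseteq>J \<Longrightarrow> F x * F y = (\<Sum>M\<in>Match (sdiff x y). B x y M)" using B2 by simp
    show "\<And>x y M S. x\<subseteq>J \<Longrightarrow> y\<subseteq>J \<Longrightarrow> M \<in> Match (sdiff x y) \<Longrightarrow> S\<in>M \<Longrightarrow>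
              B x y M = B (sdiff x S) (sdiff y S) M" using B3 by simp
    show "Omega_k J E F 0 \<noteq> {}" by (rule assms(6))
  qed
  have eq: "(\<Sum>z\<in>Omega_k J E F 0. pi_dist J E F z) = Z0 / Z"
    by (simp add: pid_eq Z0_def sum_divide_distrib)
  show ?thesis
  proof (intro ballI allI)
    fix x t assume x: "x \<in> Omega J E F"
    show "(1/2) * (\<Sum>y\<in>Omega J E F. \<bar>Ppow J E F t x y - pi_dist J E F y\<bar>)
      \<le> (1/2) * (pi_dist J E F x) powr (-1/2)
          * exp (- real t * (\<Sum>z\<in>Omega_k J E F 0. pi_dist J E F z)^2 / real (card J)^4)"
      using main_bound[OF x, of t] unfolding eq by simp
  qed
qed


end
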